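(* For $k=1,\dots,m$, \[ r_{n,k}=\partial_{t_k}\sigma_n,\qquad R_{n,k}=\frac1{2\beta_n}\Big(-\partial_{t_k}\beta_n+\mathrm{sgn}(\omega_k)\sqrt{(\partial_{t_k}\beta_n)^2+4\beta_nr_{n,k}^2}\Big), \] where \[ \beta_n=\delta\sigma_n-\sigma_n+n(n+\alpha),\qquad \partial_{t_k}\beta_n=\sum_{j=1}^m t_j\,\partial^2_{t_kt_j}\sigma_n, \] and $\mathrm{sgn}(\omega_k)$ equals $1$, $-1$, $0$ for $\omega_k>0$, $\omega_k<0$, $\omega_k=0$ respectively.
   Context: Let $m\ge1$, $\alpha>-1$, $0<t_1<\dots<t_m$, real $\omega_0,\dots,\omega_m$ with $\sum_{k=0}^\ell\omega_k\ge0$ for $\ell=0,\dots,m$, $\theta$ the Heaviside function, $w_0(x)=x^\alpha e^{-x}$, $w(x;\vec t)=w_0(x)\big(\omega_0+\sum_k\omega_k\theta(x-t_k)\big)$ on $[0,\infty)$, $P_n$ the monic orthogonal polynomials w.r.t. $w$, $h_n=\int_0^\infty P_n^2w\,dx$, $\beta_n=h_n/h_{n-1}$, $D_n(\vec t)=\det\big(\int_0^\infty x^{i+j}w\,dx\big)_{i,j=0}^{n-1}$, $\delta=\sum_kt_k\partial_{t_k}$, $\sigma_n=\delta\ln D_n$, $R_{n,k}=\omega_k\frac{w_0(t_k)}{h_n}P_n^2(t_k)$, $r_{n,k}=\omega_k\frac{w_0(t_k)}{h_{n-1}}P_n(t_k)P_{n-1}(t_k)$. *)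

theory Defs
  imports "HOL-Analysis.Analysis" "HOL-Computational_Algebra.Polynomial"
          "Jordan_Normal_Form.Determinant"
begin

text \<open>Heaviside function (value at 0 is irrelevant for all integrals below).\<close>
definition heaviside :: "real \<Rightarrow> real" where
  "heaviside x = (if x \<ge> 0 then 1 else 0)"

definition w0 :: "real \<Rightarrow> real \<Rightarrow> real" where
  "w0 \<alpha> x = x powr \<alpha> * exp (- x)"

definition wgt :: "real \<Rightarrow> nat \<Rightarrow> (nat \<Rightarrow> real) \<Rightarrow> (nat \<Rightarrow> real) \<Rightarrow> real \<Rightarrow> real" where
  "wgt \<alpha> m \<omega> t x = w0 \<alpha> x * (\<omega> 0 + (\<Sum>k=1..m. \<omega> k * heaviside (x - t k)))"

definition moment :: "real \<Rightarrow> nat \<Rightarrow> (nat \<Rightarrow> real) \<Rightarrow> (nat \<Rightarrow> real) \<Rightarrow> nat \<Rightarrow> real" where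
  "moment \<alpha> m \<omega> t j = (LINT x:{0..}|lborel. x ^ j * wgt \<alpha> m \<omega> t x)"

definition hankelD :: "real \<Rightarrow> nat \<Rightarrow> (nat \<Rightarrow> real) \<Rightarrow> nat \<Rightarrow> (nat \<Rightarrow> real) \<Rightarrow> real" where
  "hankelD \<alpha> m \<omega> n t = det (mat n n (\<lambda>(i, j). moment \<alpha> m \<omega> t (i + j)))"

definition opoly :: "real \<Rightarrow> nat \<Rightarrow> (nat \<Rightarrow> real) \<Rightarrow> (nat \<Rightarrow> real) \<Rightarrow> nat \<Rightarrow> real poly" where
  "opoly \<alpha> m \<omega> t n = (THE p. degree p = n \<and> lead_coeff p = 1 \<and>
     (\<forall>j<n. (LINT x:{0..}|lborel. poly p x * x ^ j * wgt \<alpha> m \<omega> t x) = 0))"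

definition hnorm :: "real \<Rightarrow> nat \<Rightarrow> (nat \<Rightarrow> real) \<Rightarrow> (nat \<Rightarrow> real) \<Rightarrow> nat \<Rightarrow> real" where
  "hnorm \<alpha> m \<omega> t n = (LINT x:{0..}|lborel. (poly (opoly \<alpha> m \<omega> t n) x)\<^sup>2 * wgt \<alpha> m \<omega> t x)"

definition betan :: "real \<Rightarrow> nat \<Rightarrow> (nat \<Rightarrow> real) \<Rightarrow> nat \<Rightarrow> (nat \<Rightarrow> real) \<Rightarrow> real" where
  "betan \<alpha> m \<omega> n t = hnorm \<alpha> m \<omega> t n / hnorm \<alpha> m \<omega> t (n - 1)"

definition pd :: "((nat \<Rightarrow> real) \<Rightarrow> real) \<Rightarrow> nat \<Rightarrow> (nat \<Rightarrow> real) \<Rightarrow> real" where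
  "pd F k t = deriv (\<lambda>s. F (t(k := s))) (t k)"

definition sigman :: "real \<Rightarrow> nat \<Rightarrow> (nat \<Rightarrow> real) \<Rightarrow> nat \<Rightarrow> (nat \<Rightarrow> real) \<Rightarrow> real" where
  "sigman \<alpha> m \<omega> n t = (\<Sum>k=1..m. t k * pd (\<lambda>s. ln (hankelD \<alpha> m \<omega> n s)) k t)"

definition Rnk :: "real \<Rightarrow> nat \<Rightarrow> (nat \<Rightarrow> real) \<Rightarrow> nat \<Rightarrow> nat \<Rightarrow> (nat \<Rightarrow> real) \<Rightarrow> real" where
  "Rnk \<alpha> m \<omega> n k t = \<omega> k * w0 \<alpha> (t k) / hnorm \<alpha> m \<omega> t n * (poly (opoly \<alpha> m \<omega> t n) (t k))\<^sup>2"

definition rnk :: "real \<Rightarrow> nat \<Rightarrow> (nat \<Rightarrow> real) \<Rightarrow> nat \<Rightarrow> nat \<Rightarrow> (nat \<Rightarrow> real) \<Rightarrow> real" where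
  "rnk \<alpha> m \<omega> n k t = \<omega> k * w0 \<alpha> (t k) / hnorm \<alpha> m \<omega> t (n - 1) *
     poly (opoly \<alpha> m \<omega> t n) (t k) * poly (opoly \<alpha> m \<omega> t (n - 1)) (t k)"

end

theory Submission
  imports Defs "HOL-Real_Asymp.Real_Asymp"
begin


definition Lf :: "(nat \<Rightarrow> real) \<Rightarrow> real poly \<Rightarrow> real" where
  "Lf mu p = (\<Sum>i\<le>degree p. coeff p i * mu i)"

lemma Lf_le: "degree p \<le> N \<Longrightarrow> Lf mu p = (\<Sum>i\<le>N. coeff p i * mu i)"
  unfolding Lf_def
  by (rule sum.mono_neutral_left) (auto simp: coeff_eq_0)

lemma Lf_add: "Lf mu (p + q) = Lf mu p + Lf mu q"
proof -
  let ?N = "max (degree p) (degree q)"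
  have "Lf mu (p + q) = (\<Sum>i\<le>?N. coeff (p+q) i * mu i)"
    by (rule Lf_le) (simp add: degree_add_le)
  also have "\<dots> = (\<Sum>i\<le>?N. coeff p i * mu i) + (\<Sum>i\<le>?N. coeff q i * mu i)"
    by (simp add: algebra_simps sum.distrib)
  also have "\<dots> = Lf mu p + Lf mu q"
    by (simp add: Lf_le[of p ?N] Lf_le[of q ?N])
  finally show ?thesis .
qed

lemma Lf_smult: "Lf mu (Polynomial.smult c p) = c * Lf mu p"
proof -
  have "Lf mu (Polynomial.smult c p) = (\<Sum>i\<le>degree p. coeff (Polynomial.smult c p) i * mu i)"
    by (rule Lf_le) simp
  then show ?thesis by (simp add: Lf_def sum_distrib_left mult.assoc)
qed

lemma Lf_0[simp]: "Lf mu 0 = 0"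
  by (simp add: Lf_def)

lemma Lf_minus: "Lf mu (- p) = - Lf mu p"
  using Lf_smult[of mu "-1" p] by simp

lemma Lf_diff: "Lf mu (p - q) = Lf mu p - Lf mu q"
  using Lf_add[of mu p "-q"] Lf_minus[of mu q] by simp

lemma Lf_sum: "finite A \<Longrightarrow> Lf mu (\<Sum>x\<in>A. f x) = (\<Sum>x\<in>A. Lf mu (f x))"
  by (induction A rule: finite_induct) (auto simp: Lf_add)

lemma Lf_monom: "Lf mu (monom c i) = c * mu i"
proof -
  have "Lf mu (monom c i) = (\<Sum>j\<le>i. coeff (monom c i) j * mu j)"
    by (rule Lf_le) (simp add: degree_monom_le)
  also have "\<dots> = c * mu i"
    by (subst sum.remove[of _ i]) (auto simp: coeff_monom)
  finally show ?thesis .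
qed

definition posdef :: "(nat \<Rightarrow> real) \<Rightarrow> bool" where
  "posdef mu \<longleftrightarrow> (\<forall>p. p \<noteq> 0 \<longrightarrow> Lf mu (p * p) > 0)"

definition orth :: "(nat \<Rightarrow> real) \<Rightarrow> nat \<Rightarrow> real poly \<Rightarrow> bool" where
  "orth mu n p \<longleftrightarrow> (\<forall>q. degree q < n \<longrightarrow> Lf mu (p * q) = 0)"

definition isOP :: "(nat \<Rightarrow> real) \<Rightarrow> nat \<Rightarrow> real poly \<Rightarrow> bool" where
  "isOP mu n p \<longleftrightarrow> degree p = n \<and> coeff p n = 1 \<and> (\<forall>j<n. Lf mu (p * monom 1 j) = 0)"

definition OP :: "(nat \<Rightarrow> real) \<Rightarrow> nat \<Rightarrow> real poly" where
  "OP mu n = (THE p. isOP mu n p)"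

lemma poly_sum_monoms: "p = (\<Sum>j\<le>degree p. monom (coeff p j) j)"
  by (simp add: poly_as_sum_of_monoms)

lemma orth_iff: "orth mu n p \<longleftrightarrow> (\<forall>j<n. Lf mu (p * monom 1 j) = 0)"
proof
  assume "orth mu n p" then show "\<forall>j<n. Lf mu (p * monom 1 j) = 0"
    by (auto simp: orth_def degree_monom_eq)
next
  assume H: "\<forall>j<n. Lf mu (p * monom 1 j) = 0"
  show "orth mu n p" unfolding orth_def
  proof (intro allI impI)
    fix q :: "real poly" assume q: "degree q < n"
    have "p * q = (\<Sum>j\<le>degree q. Polynomial.smult (coeff q j) (p * monom 1 j))"
      apply (subst poly_sum_monoms[of q])
      apply (simp add: sum_distrib_left)
      apply (rule sum.cong, simp)
      by (subst mult_smult_right[symmetric]) (simp add: smult_monom)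
    also have "Lf mu \<dots> = 0"
      using q H by (simp add: Lf_sum Lf_smult)
    finally show "Lf mu (p * q) = 0" .
  qed
qed

lemma deg_lt_of_coeff0:
  fixes p :: "'a::zero poly"
  assumes "degree p \<le> d" "coeff p d = 0" "p \<noteq> 0"
  shows "degree p < d"
  using assms leading_coeff_neq_0[OF assms(3)] le_neq_implies_less by fastforce

lemma isOP_unique:
  assumes pd: "posdef mu" and p: "isOP mu n p" and q: "isOP mu n q"
  shows "p = q"
proof (rule ccontr)
  assume ne: "p \<noteq> q"
  let ?d = "p - q"
  have d0: "?d \<noteq> 0" using ne by simp
  have "degree ?d \<le> n" using p q by (auto simp: isOP_def intro: degree_diff_le)
  moreover have "coeff ?d n = 0" using p q by (simp add: isOP_def)
  ultimately have dl: "degree ?d < n" using d0 deg_lt_of_coeff0 by blast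
  have op: "orth mu n p" "orth mu n q" using p q by (auto simp: isOP_def orth_iff)
  have "Lf mu (?d * ?d) = Lf mu (p * ?d) - Lf mu (q * ?d)"
    by (simp add: left_diff_distrib Lf_diff)
  also have "\<dots> = 0" using op dl by (simp add: orth_def)
  moreover have "Lf mu (?d * ?d) > 0" by (rule pd[unfolded posdef_def, rule_format, OF d0])
  ultimately show False by simp
qed

lemma Lf_comm: "Lf mu (p * q) = Lf mu (q * p)"
  by (simp add: mult.commute)

lemma orth_from_basis:
  assumes Q: "\<And>i. i < n \<Longrightarrow> degree (Q i) = i \<and> coeff (Q i) i = 1"
    and z: "\<And>i. i < n \<Longrightarrow> Lf mu (q * Q i) = 0"
  shows "orth mu n q"
  unfolding orth_def
proof (intro allI impI)
  fix r :: "real poly" assume "degree r < n"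
  then show "Lf mu (q * r) = 0"
  proof (induction "degree r" arbitrary: r rule: less_induct)
    case less
    define d where "d = degree r"
    define r' where "r' = r - Polynomial.smult (lead_coeff r) (Q d)"
    have Qd: "degree (Q d) = d" "coeff (Q d) d = 1" using Q less.prems d_def by auto
    have e: "q * r = q * r' + Polynomial.smult (lead_coeff r) (q * Q d)"
      by (simp add: r'_def right_diff_distrib)
    have "Lf mu (q * r') = 0"
    proof (cases "r' = 0")
      case False
      have "degree r' \<le> d" unfolding r'_def using Qd d_def
        by (intro degree_diff_le) (auto intro: order_trans[OF degree_smult_le])
      moreover have "coeff r' d = 0" using Qd by (simp add: r'_def d_def)
      ultimately have "degree r' < d" using False deg_lt_of_coeff0 by blast
      then show ?thesis using less.hyps less.prems d_def by force
    qed simp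
    then show ?case using e z[of d] less.prems d_def by (simp add: Lf_add Lf_smult)
  qed
qed

lemma OP_facts_strong:
  assumes pd: "posdef mu"
  shows "isOP mu n (OP mu n) \<and>
    OP mu n = monom 1 n - (\<Sum>j<n. Polynomial.smult (Lf mu (monom 1 n * OP mu j) / Lf mu (OP mu j * OP mu j)) (OP mu j))"
proof (induction n rule: less_induct)
  case (less n)
  let ?P = "OP mu"
  have IH: "\<And>j. j < n \<Longrightarrow> isOP mu j (?P j)" using less by blast
  define c where "c j = Lf mu (monom 1 n * ?P j) / Lf mu (?P j * ?P j)" for j
  define q where "q = monom 1 n - (\<Sum>j<n. Polynomial.smult (c j) (?P j))"
  have dsum: "degree (\<Sum>j<n. Polynomial.smult (c j) (?P j)) < n \<or> (\<Sum>j<n. Polynomial.smult (c j) (?P j)) = 0"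
  proof (cases n)
    case (Suc n')
    have "degree (\<Sum>j<n. Polynomial.smult (c j) (?P j)) \<le> n'"
      by (rule degree_sum_le) (use IH Suc in \<open>auto intro: order_trans[OF degree_smult_le] simp: isOP_def\<close>)
    then show ?thesis using Suc by simp
  qed simp
  have degq: "degree q = n"
    using dsum unfolding q_def
    apply (cases "(\<Sum>j<n. Polynomial.smult (c j) (?P j)) = 0")
     apply (simp add: degree_monom_eq)
    apply (subst diff_conv_add_uminus, subst degree_add_eq_left)
    by (auto simp: degree_monom_eq)
  have cq: "coeff q n = 1"
  proof -
    have "coeff (\<Sum>j<n. Polynomial.smult (c j) (?P j)) n = 0"
      using dsum coeff_eq_0 by fastforce
    then show ?thesis by (simp add: q_def)
  qed
  have ort: "\<And>i j. i < n \<Longrightarrow> j < n \<Longrightarrow> j \<noteq> i \<Longrightarrow> Lf mu (?P j * ?P i) = 0"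
  proof -
    fix i j assume ij: "i < n" "j < n" and False: "j \<noteq> i"
    show "Lf mu (?P j * ?P i) = 0"
    proof -
      from False consider "i < j" | "j < i" by linarith
      then show ?thesis
      proof cases
        case 1
        have "orth mu j (?P j)" using IH[of j] ij orth_iff[of mu j "?P j"] by (simp add: isOP_def)
        have "Lf mu (?P j * ?P i) = 0"
          using \<open>orth mu j (?P j)\<close>[unfolded orth_def, rule_format, of "?P i"] IH[of i] ij 1
          by (simp add: isOP_def)
        then show ?thesis using False by simp
      next
        case 2
        have "orth mu i (?P i)" using IH[of i] ij orth_iff[of mu i "?P i"] by (simp add: isOP_def)
        then have "Lf mu (?P i * ?P j) = 0"
          using \<open>orth mu i (?P i)\<close>[unfolded orth_def, rule_format, of "?P j"] IH[of j] ij 2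
          by (simp add: isOP_def)
        then show ?thesis using False by (simp add: Lf_comm)
      qed
    qed
  qed
  have hpos: "\<And>i. i < n \<Longrightarrow> Lf mu (?P i * ?P i) \<noteq> 0"
  proof -
    fix i assume "i < n"
    then have "?P i \<noteq> 0" using IH[of i] by (auto simp: isOP_def)
    then show "Lf mu (?P i * ?P i) \<noteq> 0" using pd by (auto simp: posdef_def)
  qed
  have zi: "Lf mu (q * ?P i) = 0" if i: "i < n" for i
  proof -
    have "Lf mu (q * ?P i) = Lf mu (monom 1 n * ?P i) - (\<Sum>j<n. c j * Lf mu (?P j * ?P i))"
      by (simp add: q_def left_diff_distrib Lf_diff Lf_sum sum_distrib_right Lf_smult)
    also have "(\<Sum>j<n. c j * Lf mu (?P j * ?P i)) = c i * Lf mu (?P i * ?P i)"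
      using i by (subst sum.remove[of _ i]) (auto simp: ort intro!: sum.neutral)
    also have "\<dots> = Lf mu (monom 1 n * ?P i)"
      using hpos[OF i] by (simp add: c_def)
    finally show ?thesis by simp
  qed
  have "orth mu n q"
    by (rule orth_from_basis[of n "?P"]) (use IH zi in \<open>auto simp: isOP_def\<close>)
  then have isq: "isOP mu n q" using degq cq by (simp add: isOP_def orth_iff)
  have "?P n = q" unfolding OP_def
    by (rule the_equality[where P="isOP mu n", OF isq]) (use isOP_unique[OF pd isq] in auto)
  then show ?case using isq by (simp add: q_def c_def)
qed

lemma OP_isOP: "posdef mu \<Longrightarrow> isOP mu n (OP mu n)"
  using OP_facts_strong by blast

lemma OP_GS: "posdef mu \<Longrightarrow> OP mu n = monom 1 n - (\<Sum>j<n. Polynomial.smult (Lf mu (monom 1 n * OP mu j) / Lf mu (OP mu j * OP mu j)) (OP mu j))"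
  using OP_facts_strong by blast

lemma OP_degree: "posdef mu \<Longrightarrow> degree (OP mu n) = n"
  using OP_isOP by (simp add: isOP_def)

lemma OP_lead: "posdef mu \<Longrightarrow> coeff (OP mu n) n = 1"
  using OP_isOP[of mu n] by (simp add: isOP_def)

lemma OP_orth: "posdef mu \<Longrightarrow> degree q < n \<Longrightarrow> Lf mu (OP mu n * q) = 0"
  using OP_isOP[of mu n] orth_iff[of mu n] by (auto simp: isOP_def orth_def)

lemma OP_nz: "posdef mu \<Longrightarrow> OP mu n \<noteq> 0"
  using OP_lead[of mu n] by auto

lemma OP_hpos: "posdef mu \<Longrightarrow> Lf mu (OP mu n * OP mu n) > 0"
  using OP_nz posdef_def by blast

lemma OP_F4:
  assumes pd: "posdef mu" and dq: "degree q \<le> n"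
  shows "Lf mu (OP mu n * q) = coeff q n * Lf mu (OP mu n * OP mu n)"
proof -
  define r where "r = q - Polynomial.smult (coeff q n) (OP mu n)"
  have "Lf mu (OP mu n * r) = 0"
  proof (cases "r = 0")
    case False
    have "degree r \<le> n" unfolding r_def using dq OP_degree[OF pd, of n]
      by (metis degree_diff_le degree_smult_le le_refl order_trans)
    moreover have "coeff r n = 0" using OP_lead[OF pd] by (simp add: r_def)
    ultimately have "degree r < n" using False deg_lt_of_coeff0 by blast
    then show ?thesis using OP_orth[OF pd] by blast
  qed simp
  moreover have "OP mu n * q = OP mu n * r + Polynomial.smult (coeff q n) (OP mu n * OP mu n)"
    by (simp add: r_def right_diff_distrib)
  ultimately show ?thesis
    by (simp add: Lf_add Lf_smult)
qed


definition Ig :: "real \<Rightarrow> nat \<Rightarrow> real \<Rightarrow> real" where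
  "Ig \<alpha> i c = (LINT x:{c<..}|lborel. x ^ i * w0 \<alpha> x)"

lemma w0_pow: "x \<ge> 0 \<Longrightarrow> x ^ i * w0 \<alpha> x = x powr (real i + \<alpha>) / exp x"
proof (cases "x = 0")
  case False
  assume "x \<ge> 0"
  with False have x: "x > 0" by simp
  then show ?thesis
    by (simp add: w0_def powr_add powr_realpow exp_minus field_simps)
qed (simp add: w0_def)

lemma int0:
  assumes a: "\<alpha> > -1"
  shows "set_integrable lborel {0..} (\<lambda>x. x ^ i * w0 \<alpha> x)"
proof -
  define s where "s = real i + \<alpha> + 1"
  have s: "s > 0" using a unfolding s_def by simp
  have G: "Gamma s = nn_integral lborel (\<lambda>t. ennreal (indicator {0..} t * t powr (s - 1) / exp t))"
    by (rule Gamma_conv_nn_integral_real[OF s])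
  have "integrable lborel (\<lambda>t. indicator {0..} t * t powr (s - 1) / exp t)"
  proof (rule integrableI_nonneg)
    show "(\<lambda>t. indicator {0..} t * t powr (s - 1) / exp t) \<in> borel_measurable lborel"
      by measurable
    show "AE x in lborel. 0 \<le> indicat_real {0..} x * x powr (s - 1) / exp x"
      by (auto simp: indicator_def)
    show "(\<integral>\<^sup>+ x. ennreal (indicat_real {0..} x * x powr (s - 1) / exp x) \<partial>lborel) < \<infinity>"
      using G[symmetric] by simp
  qed
  moreover have "indicator {0..} t * t powr (s - 1) / exp t = indicator {0..} t *\<^sub>R (t ^ i * w0 \<alpha> t)" for t :: real
    by (cases "t \<ge> 0") (auto simp: w0_pow s_def indicator_def)
  ultimately show ?thesis unfolding set_integrable_def by simp
qed

lemma intc: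
  assumes a: "\<alpha> > -1" and c: "c \<ge> 0"
  shows "set_integrable lborel {c<..} (\<lambda>x. x ^ i * w0 \<alpha> x)"
  by (rule set_integrable_subset[OF int0[OF a]]) (use c in auto)

lemma intc':
  assumes a: "\<alpha> > -1" and c: "c \<ge> 0"
  shows "set_integrable lborel {c..} (\<lambda>x. x ^ i * w0 \<alpha> x)"
  by (rule set_integrable_subset[OF int0[OF a]]) (use c in auto)

lemma Ig_rec:
  assumes a: "\<alpha> > -1" and c: "c \<ge> 0"
  shows "Ig \<alpha> (Suc i) c = (real i + 1 + \<alpha>) * Ig \<alpha> i c + c ^ Suc i * w0 \<alpha> c"
proof -
  define f where "f x = x ^ Suc i * w0 \<alpha> x - (real i + 1 + \<alpha>) * (x ^ i * w0 \<alpha> x)" for x :: real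
  define F where "F x = - (x powr (real i + 1 + \<alpha>) * exp (- x))" for x :: real
  have fi: "set_integrable lborel {c<..} f"
    unfolding f_def
    by (intro set_integral_diff set_integrable_mult_right intc a c)
  have "(LBINT x=ereal c..\<infinity>. f x) = 0 - F c"
  proof (rule interval_integral_FTC_integrable)
    show "ereal c < \<infinity>" by simp
    fix x assume x: "ereal c < ereal x" "ereal x < \<infinity>"
    then have x0: "x > 0" using c by simp
    have "(F has_real_derivative f x) (at x)"
    proof -
      have "(F has_real_derivative - ((real i + 1 + \<alpha>) * x powr (real i + 1 + \<alpha> - 1) * exp (- x) - x powr (real i + 1 + \<alpha>) * exp (- x))) (at x)"
        unfolding F_def using x0 by (auto intro!: derivative_eq_intros)
      moreover have "- ((real i + 1 + \<alpha>) * x powr (real i + 1 + \<alpha> - 1) * exp (- x) - x powr (real i + 1 + \<alpha>) * exp (- x)) = f x"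
      proof -
        have P: "x ^ i * w0 \<alpha> x = x powr (real i + \<alpha>) * exp (- x)"
          using x0 by (simp add: w0_def powr_add powr_realpow)
        have e1: "x powr (real i + 1 + \<alpha> - 1) = x powr (real i + \<alpha>)" by (simp add: algebra_simps)
        have e2: "x powr (real i + 1 + \<alpha>) = x * x powr (real i + \<alpha>)"
          using x0 by (simp add: powr_add add.assoc[symmetric] add.commute[of _ 1])
        have "f x = x * (x ^ i * w0 \<alpha> x) - (real i + 1 + \<alpha>) * (x ^ i * w0 \<alpha> x)"
          by (simp add: f_def mult.assoc)
        then show ?thesis unfolding P e1 e2 by (simp add: algebra_simps)
      qed
      ultimately show ?thesis by simp
    qed
    then show "(F has_vector_derivative f x) (at x)"
      by (simp add: has_real_derivative_iff_has_vector_derivative)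
    show "isCont f x"
      unfolding f_def w0_def using x0 by (auto intro!: continuous_intros)
  next
    show "set_integrable lborel (einterval (ereal c) \<infinity>) f"
      using fi by (simp add: einterval_def greaterThan_def)
  next
    show "((F \<circ> real_of_ereal) \<longlongrightarrow> F c) (at_right (ereal c))"
      unfolding ereal_tendsto_simps
    proof (cases "c = 0")
      case True
      have "((\<lambda>x. - (x powr (real i + 1 + \<alpha>) * exp (- x))) \<longlongrightarrow> - (0 * exp (- 0))) (at_right 0)"
      proof (intro tendsto_intros tendsto_zero_powrI)
        show "\<forall>\<^sub>F x in at_right 0. 0 \<le> (x::real)"
          using eventually_at_right_less[of "0::real"] by (rule eventually_mono) simp
      qed (use a in auto)
      then show "(F \<longlongrightarrow> F c) (at_right c)" using True unfolding F_def by simp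
    next
      case False
      then have "c > 0" using c by simp
      then have "isCont F c" unfolding F_def by (auto intro!: continuous_intros)
      then show "(F \<longlongrightarrow> F c) (at_right c)"
        by (simp add: isCont_def filterlim_at_split)
    qed
  next
    show "((F \<circ> real_of_ereal) \<longlongrightarrow> 0) (at_left \<infinity>)"
      unfolding ereal_tendsto_simps F_def by real_asymp
  qed
  then have "(LINT x:{c<..}|lborel. f x) = - F c"
    by (simp add: interval_integral_Ioi)
  also have "(LINT x:{c<..}|lborel. f x) = Ig \<alpha> (Suc i) c - (real i + 1 + \<alpha>) * Ig \<alpha> i c"
    unfolding f_def Ig_def
    by (subst set_integral_diff(2)[OF intc[OF a c, of "Suc i"] set_integrable_mult_right[OF intc[OF a c, of i]]])
       (simp add: set_integral_mult_right del: power_Suc)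
  finally have "Ig \<alpha> (Suc i) c - (real i + 1 + \<alpha>) * Ig \<alpha> i c = - F c" .
  moreover have "c ^ Suc i * w0 \<alpha> c = c powr (real i + 1 + \<alpha>) * exp (- c)"
    using w0_pow[OF c, of "Suc i" \<alpha>] by (simp add: exp_minus divide_inverse add_ac)
  ultimately show ?thesis by (simp add: F_def)
qed

lemma Ig_interval: "Ig \<alpha> i c = (LBINT x=ereal c..\<infinity>. x ^ i * w0 \<alpha> x)"
  by (simp add: Ig_def interval_integral_Ioi)

lemma Ig_deriv:
  assumes a: "\<alpha> > -1" and c0: "c0 > 0"
  shows "(Ig \<alpha> i has_real_derivative - (c0 ^ i * w0 \<alpha> c0)) (at c0)"
proof -
  define g where "g x = x ^ i * w0 \<alpha> x" for x :: real
  define lo where "lo = c0 / 2"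
  define hi where "hi = 2 * c0"
  have lo: "0 < lo" "lo < c0" "c0 < hi" using c0 by (auto simp: lo_def hi_def)
  have cont: "continuous_on {lo..hi} g"
    unfolding g_def w0_def using lo
    by (intro continuous_on_mult continuous_on_power continuous_on_id continuous_on_exp continuous_on_minus
        continuous_on_powr') (auto intro: continuous_intros)
  have split: "Ig \<alpha> i c = Ig \<alpha> i lo - (LBINT x=ereal lo..ereal c. g x)" if c: "lo < c" for c
  proof -
    have "interval_lebesgue_integrable lborel (min (ereal lo) (min (ereal c) \<infinity>)) (max (ereal lo) (max (ereal c) \<infinity>)) g"
      using c lo intc[OF a, of lo i]
      by (simp add: interval_lebesgue_integrable_def einterval_def greaterThan_def g_def[abs_def] min_def max_def)
    from interval_integral_sum[OF this] show ?thesis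
      by (simp add: Ig_interval g_def)
  qed
  have "((\<lambda>u. LBINT y=ereal lo..ereal u. g y) has_vector_derivative g c0) (at c0 within {lo..hi})"
    by (rule interval_integral_FTC2) (use lo cont in auto)
  then have "((\<lambda>u. LBINT y=ereal lo..ereal u. g y) has_vector_derivative g c0) (at c0)"
    using at_within_Icc_at[of lo c0 hi] lo by simp
  then have D: "((\<lambda>u. LBINT y=ereal lo..ereal u. g y) has_real_derivative g c0) (at c0)"
    by (simp add: has_real_derivative_iff_has_vector_derivative)
  have "((\<lambda>u. Ig \<alpha> i lo - (LBINT y=ereal lo..ereal u. g y)) has_real_derivative - g c0) (at c0)"
    using DERIV_diff[OF DERIV_const[of "Ig \<alpha> i lo" "at c0"] D] by simp
  moreover have "\<forall>\<^sub>F u in nhds c0. Ig \<alpha> i u = Ig \<alpha> i lo - (LBINT y=ereal lo..ereal u. g y)"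
    using eventually_gt_at_top lo
    by (intro eventually_mono[OF eventually_nhds_in_open[of "{lo<..}" c0]]) (auto intro: split)
  ultimately show ?thesis
    by (subst DERIV_cong_ev[OF refl _ refl]) (auto simp: g_def)
qed

lemma heav_ind: "heaviside (x - c) = indicator {c..} x"
  by (simp add: heaviside_def indicator_def)

lemma G_int:
  assumes a: "\<alpha> > -1" and c: "c \<ge> 0"
  shows "integrable lborel (\<lambda>x. indicator {c..} x * (x ^ j * w0 \<alpha> x))"
    "(LINT x|lborel. indicator {c..} x * (x ^ j * w0 \<alpha> x)) = Ig \<alpha> j c"
proof -
  show I1: "integrable lborel (\<lambda>x. indicator {c..} x * (x ^ j * w0 \<alpha> x))"
    using intc'[OF a c, of j] by (simp add: set_integrable_def)
  have I2: "integrable lborel (\<lambda>x. indicator {c<..} x * (x ^ j * w0 \<alpha> x))"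
    using intc[OF a c, of j] by (simp add: set_integrable_def)
  have "(LINT x|lborel. indicator {c..} x * (x ^ j * w0 \<alpha> x)) = (LINT x|lborel. indicator {c<..} x * (x ^ j * w0 \<alpha> x))"
  proof (rule integral_cong_AE)
    show "AE x in lborel. indicator {c..} x * (x ^ j * w0 \<alpha> x) = indicator {c<..} x * (x ^ j * w0 \<alpha> x)"
      using AE_lborel_singleton[of c] by eventually_elim (auto simp: indicator_def)
  qed (use I1 I2 in \<open>auto intro: borel_measurable_integrable\<close>)
  then show "(LINT x|lborel. indicator {c..} x * (x ^ j * w0 \<alpha> x)) = Ig \<alpha> j c"
    by (simp add: Ig_def set_lebesgue_integral_def)
qed

lemma wgt_decomp:
  assumes t: "\<forall>l\<in>{1..m}. t l \<ge> 0"
  shows "indicator {0..} x * (x ^ j * wgt \<alpha> m \<omega> t x) =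
    \<omega> 0 * (indicator {0..} x * (x ^ j * w0 \<alpha> x)) + (\<Sum>l=1..m. \<omega> l * (indicator {t l..} x * (x ^ j * w0 \<alpha> x)))"
proof (cases "x \<ge> 0")
  case True
  have "x ^ j * wgt \<alpha> m \<omega> t x = \<omega> 0 * (x ^ j * w0 \<alpha> x) + (\<Sum>l=1..m. \<omega> l * (indicator {t l..} x * (x ^ j * w0 \<alpha> x)))"
    unfolding wgt_def heav_ind
    apply (simp only: distrib_left sum_distrib_left)
    apply (intro arg_cong2[where f="(+)"] sum.cong refl)
    by (simp_all add: mult_ac)
  then show ?thesis using True by simp
next
  case False
  then have "\<forall>l\<in>{1..m}. indicator {t l..} x = (0::real)" using t by (auto simp: indicator_def)
  then show ?thesis using False by (simp add: indicator_def)
qed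

lemma moment_eq:
  assumes a: "\<alpha> > -1" and t: "\<forall>l\<in>{1..m}. t l \<ge> 0"
  shows "integrable lborel (\<lambda>x. indicator {0..} x * (x ^ j * wgt \<alpha> m \<omega> t x))"
    "moment \<alpha> m \<omega> t j = \<omega> 0 * Ig \<alpha> j 0 + (\<Sum>l=1..m. \<omega> l * Ig \<alpha> j (t l))"
proof -
  have ints: "integrable lborel (\<lambda>x. \<omega> l * (indicator {t l..} x * (x ^ j * w0 \<alpha> x)))" if "l \<in> {1..m}" for l
    using G_int(1)[OF a, of "t l" j] t that by simp
  have int0: "integrable lborel (\<lambda>x. \<omega> 0 * (indicator {0..} x * (x ^ j * w0 \<alpha> x)))"
    using G_int(1)[OF a, of 0 j] by simp
  have eq: "(\<lambda>x. indicator {0..} x * (x ^ j * wgt \<alpha> m \<omega> t x)) =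
    (\<lambda>x. \<omega> 0 * (indicator {0..} x * (x ^ j * w0 \<alpha> x)) + (\<Sum>l=1..m. \<omega> l * (indicator {t l..} x * (x ^ j * w0 \<alpha> x))))"
    using wgt_decomp[OF t] by (simp add: fun_eq_iff)
  show "integrable lborel (\<lambda>x. indicator {0..} x * (x ^ j * wgt \<alpha> m \<omega> t x))"
    unfolding eq by (intro Bochner_Integration.integrable_add int0 Bochner_Integration.integrable_sum ints)
  have "moment \<alpha> m \<omega> t j = (LINT x|lborel. indicator {0..} x * (x ^ j * wgt \<alpha> m \<omega> t x))"
    by (simp add: moment_def set_lebesgue_integral_def)
  also have "\<dots> = (LINT x|lborel. \<omega> 0 * (indicator {0..} x * (x ^ j * w0 \<alpha> x))) +
      (\<Sum>l=1..m. (LINT x|lborel. \<omega> l * (indicator {t l..} x * (x ^ j * w0 \<alpha> x))))"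
    unfolding eq
    by (subst Bochner_Integration.integral_add[OF int0 Bochner_Integration.integrable_sum[OF ints]], simp,
        subst Bochner_Integration.integral_sum[OF ints]) auto
  also have "\<dots> = \<omega> 0 * Ig \<alpha> j 0 + (\<Sum>l=1..m. \<omega> l * Ig \<alpha> j (t l))"
    using G_int(2)[OF a] t by simp
  finally show "moment \<alpha> m \<omega> t j = \<omega> 0 * Ig \<alpha> j 0 + (\<Sum>l=1..m. \<omega> l * Ig \<alpha> j (t l))" .
qed

lemma LINT_poly:
  assumes a: "\<alpha> > -1" and t: "\<forall>l\<in>{1..m}. t l \<ge> 0"
  shows "(LINT x:{0..}|lborel. poly q x * wgt \<alpha> m \<omega> t x) = Lf (moment \<alpha> m \<omega> t) q"
proof -
  have ints: "integrable lborel (\<lambda>x. coeff q i * (indicator {0..} x * (x ^ i * wgt \<alpha> m \<omega> t x)))" for i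
    using moment_eq(1)[OF a t, of i] by simp
  have eq: "(\<lambda>x. indicator {0..} x *\<^sub>R (poly q x * wgt \<alpha> m \<omega> t x)) =
     (\<lambda>x. \<Sum>i\<le>degree q. coeff q i * (indicator {0..} x * (x ^ i * wgt \<alpha> m \<omega> t x)))"
    by (simp add: fun_eq_iff poly_altdef sum_distrib_left sum_distrib_right algebra_simps)
  have "(LINT x:{0..}|lborel. poly q x * wgt \<alpha> m \<omega> t x) =
     (\<Sum>i\<le>degree q. (LINT x|lborel. coeff q i * (indicator {0..} x * (x ^ i * wgt \<alpha> m \<omega> t x))))"
    unfolding set_lebesgue_integral_def eq by (rule Bochner_Integration.integral_sum[OF ints])
  also have "\<dots> = (\<Sum>i\<le>degree q. coeff q i * moment \<alpha> m \<omega> t i)"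
    by (simp add: moment_def set_lebesgue_integral_def)
  finally show ?thesis by (simp add: Lf_def)
qed


lemma poly_wgt_int:
  assumes a: "\<alpha> > -1" and t: "\<forall>l\<in>{1..m}. t l \<ge> 0"
  shows "integrable lborel (\<lambda>x. indicator {0..} x * (poly q x * wgt \<alpha> m \<omega> t x))"
proof -
  have ints: "integrable lborel (\<lambda>x. coeff q i * (indicator {0..} x * (x ^ i * wgt \<alpha> m \<omega> t x)))" for i
    using moment_eq(1)[OF a t, of i] by simp
  have eq: "(\<lambda>x. indicator {0..} x * (poly q x * wgt \<alpha> m \<omega> t x)) =
     (\<lambda>x. \<Sum>i\<le>degree q. coeff q i * (indicator {0..} x * (x ^ i * wgt \<alpha> m \<omega> t x)))"
    by (simp add: fun_eq_iff poly_altdef sum_distrib_left sum_distrib_right algebra_simps)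
  show ?thesis unfolding eq by (intro Bochner_Integration.integrable_sum ints)
qed

definition goodt :: "nat \<Rightarrow> (nat \<Rightarrow> real) \<Rightarrow> bool" where
  "goodt m t \<longleftrightarrow> 0 < t 1 \<and> (\<forall>j\<in>{1..<m}. t j < t (Suc j))"

lemma goodt_mono:
  assumes g: "goodt m t" and ij: "1 \<le> i" "i < j" "j \<le> m"
  shows "t i < t j"
  using ij
proof (induction j)
  case 0 then show ?case by simp
next
  case (Suc j)
  have step: "t j < t (Suc j)" using g Suc.prems by (auto simp: goodt_def)
  show ?case
  proof (cases "i = j")
    case True then show ?thesis using step by simp
  next
    case False
    then have "t i < t j" using Suc by simp
    then show ?thesis using step by simp
  qed
qed

lemma goodt_le:
  assumes g: "goodt m t" and ij: "1 \<le> i" "i \<le> j" "j \<le> m"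
  shows "t i \<le> t j"
  using goodt_mono[OF g, of i j] ij by (cases "i = j") auto

lemma goodt_pos:
  assumes g: "goodt m t" and l: "l \<in> {1..m}"
  shows "t l > 0"
proof -
  have "t 1 \<le> t l" using goodt_le[OF g, of 1 l] l by auto
  moreover have "t 1 > 0" using g by (simp add: goodt_def)
  ultimately show ?thesis by simp
qed

lemma wsum_interval:
  assumes g: "goodt m t" and l: "l \<le> m"
    and lo: "l = 0 \<or> t l \<le> x" and hi: "l = m \<or> x < t (Suc l)"
  shows "\<omega> 0 + (\<Sum>k=1..m. \<omega> k * heaviside (x - t k)) = (\<Sum>i\<le>l. \<omega> i)"
proof -
  have h1: "heaviside (x - t k) = 1" if "k \<in> {1..l}" for k
  proof -
    have "t k \<le> t l" using goodt_le[OF g, of k l] that l by auto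
    then have "t k \<le> x" using lo that by auto
    then show ?thesis by (simp add: heaviside_def)
  qed
  have h0: "heaviside (x - t k) = 0" if "k \<in> {Suc l..m}" for k
  proof -
    have "l \<noteq> m" using that by auto
    then have "x < t (Suc l)" using hi by auto
    moreover have "t (Suc l) \<le> t k" using goodt_le[OF g, of "Suc l" k] that by auto
    ultimately show ?thesis by (simp add: heaviside_def)
  qed
  have split: "{1..m} = {1..l} \<union> {Suc l..m}" using l by auto
  have "(\<Sum>k=1..m. \<omega> k * heaviside (x - t k)) = (\<Sum>k=1..l. \<omega> k * heaviside (x - t k)) + (\<Sum>k=Suc l..m. \<omega> k * heaviside (x - t k))"
    unfolding split by (rule sum.union_disjoint) auto
  also have "\<dots> = (\<Sum>k=1..l. \<omega> k)" using h1 h0 by simp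
  finally have "\<omega> 0 + (\<Sum>k=1..m. \<omega> k * heaviside (x - t k)) = \<omega> 0 + (\<Sum>k=1..l. \<omega> k)" by simp
  also have "\<dots> = (\<Sum>i\<le>l. \<omega> i)"
    by (simp add: atMost_atLeast0 sum.atLeast_Suc_atMost[symmetric])
  finally show ?thesis .
qed

lemma wsum_nonneg:
  assumes g: "goodt m t" and w: "\<forall>l\<le>m. (\<Sum>i\<le>l. \<omega> i) \<ge> 0"
  shows "\<omega> 0 + (\<Sum>k=1..m. \<omega> k * heaviside (x - t k)) \<ge> 0"
proof -
  define L where "L = {l. l \<le> m \<and> (l = 0 \<or> t l \<le> x)}"
  have fin: "finite L" "0 \<in> L" by (auto simp: L_def)
  define l where "l = Max L"
  have lL: "l \<in> L" using fin unfolding l_def by (intro Max_in) auto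
  have hi: "l = m \<or> x < t (Suc l)"
  proof (rule ccontr)
    assume "\<not> (l = m \<or> x < t (Suc l))"
    then have "Suc l \<in> L" using lL by (auto simp: L_def)
    then have "Suc l \<le> l" using fin unfolding l_def by (intro Max_ge) auto
    then show False by simp
  qed
  have "\<omega> 0 + (\<Sum>k=1..m. \<omega> k * heaviside (x - t k)) = (\<Sum>i\<le>l. \<omega> i)"
    by (rule wsum_interval[OF g]) (use lL hi in \<open>auto simp: L_def\<close>)
  then show ?thesis using w lL by (auto simp: L_def)
qed

lemma w0_pos: "x > 0 \<Longrightarrow> w0 \<alpha> x > 0"
  by (simp add: w0_def)

lemma w0_nonneg: "x \<ge> 0 \<Longrightarrow> w0 \<alpha> x \<ge> 0"
  by (simp add: w0_def)

lemma posdef_moment: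
  assumes a: "\<alpha> > -1" and g: "goodt m t"
    and w: "\<forall>l\<le>m. (\<Sum>i\<le>l. \<omega> i) \<ge> 0" and w': "\<exists>l\<le>m. (\<Sum>i\<le>l. \<omega> i) > 0"
  shows "posdef (moment \<alpha> m \<omega> t)"
  unfolding posdef_def
proof (intro allI impI)
  fix p :: "real poly" assume p: "p \<noteq> 0"
  have t: "\<forall>l\<in>{1..m}. t l \<ge> 0" using goodt_pos[OF g] by (auto intro: less_imp_le)
  define f where "f x = indicator {0..} x * (poly (p * p) x * wgt \<alpha> m \<omega> t x)" for x
  have fint: "integrable lborel f" unfolding f_def by (rule poly_wgt_int[OF a t])
  have L: "Lf (moment \<alpha> m \<omega> t) (p * p) = (LINT x|lborel. f x)"
    using LINT_poly[OF a t, of "p * p" \<omega>] by (simp add: f_def set_lebesgue_integral_def)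
  have fnn: "f x \<ge> 0" for x
  proof (cases "x \<ge> 0")
    case True
    have "wgt \<alpha> m \<omega> t x \<ge> 0"
      unfolding wgt_def using w0_nonneg[OF True] wsum_nonneg[OF g w, of x] by simp
    moreover have "poly (p * p) x \<ge> 0" by simp
    ultimately show ?thesis by (simp add: f_def)
  qed (simp add: f_def)
  obtain l0 where l0: "l0 \<le> m" "(\<Sum>i\<le>l0. \<omega> i) > 0" using w' by blast
  define S where "S = (\<Sum>i\<le>l0. \<omega> i)"
  define lo where "lo = (if l0 = 0 then 0 else t l0)"
  define hi where "hi = (if l0 = m then lo + 1 else t (Suc l0))"
  have lo0: "lo \<ge> 0" using t l0 by (auto simp: lo_def)
  have lohi: "lo < hi"
  proof (cases "l0 = m")
    case False
    show ?thesis
    proof (cases "l0 = 0")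
      case True
      then show ?thesis using False g goodt_pos[OF g, of 1] l0 by (auto simp: lo_def hi_def)
    next
      case False2: False
      then show ?thesis using False goodt_mono[OF g, of l0 "Suc l0"] l0 by (auto simp: lo_def hi_def)
    qed
  qed (simp add: hi_def)
  have wI: "wgt \<alpha> m \<omega> t x = w0 \<alpha> x * S" if x: "x \<in> {lo<..<hi}" for x
  proof -
    have "\<omega> 0 + (\<Sum>k=1..m. \<omega> k * heaviside (x - t k)) = S"
      unfolding S_def
      by (rule wsum_interval[OF g l0(1)]) (use x in \<open>auto simp: lo_def hi_def split: if_splits\<close>)
    then show ?thesis by (simp add: wgt_def)
  qed
  define h where "h x = indicator {lo<..<hi} x * (poly (p * p) x * w0 \<alpha> x)" for x
  have Sh: "S * h x = f x * indicator {lo<..<hi} x" for x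
    using wI[of x] lo0 by (auto simp: h_def f_def indicator_def)
  have hint: "integrable lborel h"
  proof -
    have "integrable lborel (\<lambda>x. f x * indicator {lo<..<hi} x)"
      by (rule integrable_real_mult_indicator) (use fint in auto)
    then have "integrable lborel (\<lambda>x. (1 / S) * (f x * indicator {lo<..<hi} x))" by simp
    moreover have "(1 / S) * (f x * indicator {lo<..<hi} x) = h x" for x
      using Sh[of x] l0 by (simp add: S_def field_simps)
    ultimately show ?thesis by simp
  qed
  have pp: "poly (p * p) x \<ge> 0" for x by simp
  have hnn: "h x \<ge> 0" for x
    using lo0 pp[of x] w0_nonneg[of x \<alpha>] by (auto simp: h_def indicator_def simp del: poly_mult)
  have hpos: "(LINT x|lborel. h x) > 0"
  proof (rule ccontr)
    assume "\<not> (LINT x|lborel. h x) > 0"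
    moreover have "(LINT x|lborel. h x) \<ge> 0" using hnn by simp
    ultimately have "(LINT x|lborel. h x) = 0" by simp
    then have AE0: "AE x in lborel. h x = 0"
      using integral_nonneg_eq_0_iff_AE[OF hint] hnn by simp
    define R where "R = {x. poly p x = 0}"
    have finR: "finite R" unfolding R_def using poly_roots_finite[OF p] by simp
    have AER: "AE x in lborel. \<forall>r\<in>R. x \<noteq> r"
      using finR by (simp add: AE_finite_all AE_lborel_singleton)
    have "AE x in lborel. x \<notin> {lo<..<hi}"
      using AE0 AER
    proof eventually_elim
      case (elim x)
      show ?case
      proof
        assume x: "x \<in> {lo<..<hi}"
        then have "x > 0" using lo0 by simp
        then have "w0 \<alpha> x > 0" by (rule w0_pos)
        then have "poly p x = 0" using elim(1) x by (simp add: h_def)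
        then show False using elim(2) by (auto simp: R_def)
      qed
    qed
    then have "emeasure lborel {lo<..<hi} = 0"
      by (subst (asm) AE_iff_measurable[of "{lo<..<hi}"]) auto
    then show False using lohi by simp
  qed
  have "S * (LINT x|lborel. h x) \<le> (LINT x|lborel. f x)"
  proof -
    have "S * (LINT x|lborel. h x) = (LINT x|lborel. S * h x)" by simp
    also have "\<dots> \<le> (LINT x|lborel. f x)"
    proof (rule integral_mono)
      show "integrable lborel (\<lambda>x. S * h x)" using hint by simp
      show "integrable lborel f" by (rule fint)
      fix x show "S * h x \<le> f x" unfolding Sh using fnn[of x] by (auto simp: indicator_def)
    qed
    finally show ?thesis .
  qed
  moreover have "S * (LINT x|lborel. h x) > 0" using hpos l0 by (simp add: S_def)
  ultimately show "Lf (moment \<alpha> m \<omega> t) (p * p) > 0" using L by simp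
qed


lemma poly_sum_lt:
  fixes p :: "'a::comm_ring_1 poly"
  assumes "degree p < n"
  shows "p = (\<Sum>a<n. monom (coeff p a) a)"
proof -
  have n: "{..<n} = {..n - 1}" using assms by auto
  show ?thesis unfolding n using poly_as_sum_of_monoms'[of p "n - 1"] assms by simp
qed

lemma Lf_prod:
  assumes "degree p < n" "degree q < n"
  shows "Lf mu (p * q) = (\<Sum>a<n. \<Sum>b<n. coeff p a * mu (a + b) * coeff q b)"
proof -
  have "p * q = (\<Sum>a<n. monom (coeff p a) a) * (\<Sum>b<n. monom (coeff q b) b)"
    using poly_sum_lt[OF assms(1)] poly_sum_lt[OF assms(2)] by simp
  also have "\<dots> = (\<Sum>a<n. \<Sum>b<n. monom (coeff p a * coeff q b) (a + b))"
    by (simp add: sum_product mult_monom)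
  finally have "Lf mu (p * q) = (\<Sum>a<n. \<Sum>b<n. Lf mu (monom (coeff p a * coeff q b) (a + b)))"
    by (simp add: Lf_sum)
  then show ?thesis by (simp add: Lf_monom mult_ac)
qed

lemma hankel_det:
  assumes pd: "posdef mu"
  shows "det (mat n n (\<lambda>(i, j). mu (i + j))) = (\<Prod>j<n. Lf mu (OP mu j * OP mu j))"
proof -
  define H where "H = mat n n (\<lambda>(i, j). mu (i + j))"
  define A where "A = mat n n (\<lambda>(i, j). coeff (OP mu i) j)"
  define D where "D = mat n n (\<lambda>(i, j). Lf mu (OP mu i * OP mu j))"
  have HC: "H \<in> carrier_mat n n" and AC: "A \<in> carrier_mat n n" and DC: "D \<in> carrier_mat n n"
    by (auto simp: H_def A_def D_def)
  have detA: "det A = 1"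
  proof -
    have "det A = prod_list (diag_mat A)"
    proof (rule det_lower_triangular[OF _ AC])
      fix i j assume "i < j" "j < n"
      then show "A $$ (i, j) = 0" using OP_degree[OF pd, of i]
        by (auto simp: A_def coeff_eq_0)
    qed
    also have "diag_mat A = map (\<lambda>i. 1) [0..<n]"
      by (auto simp: diag_mat_def A_def OP_lead[OF pd] intro!: map_cong)
    also have "prod_list \<dots> = 1" by (induction n) auto
    finally show ?thesis .
  qed
  have detAT: "det (transpose_mat A) = 1" using det_transpose[OF AC] detA by simp
  have prodeq: "A * H * transpose_mat A = D"
  proof (rule eq_matI)
    show "dim_row (A * H * transpose_mat A) = dim_row D" "dim_col (A * H * transpose_mat A) = dim_col D"
      by (auto simp: A_def H_def D_def)
    fix i j assume ij: "i < dim_row D" "j < dim_col D"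
    then have ij': "i < n" "j < n" by (auto simp: D_def)
    have "(A * H * transpose_mat A) $$ (i, j) = (\<Sum>b<n. (\<Sum>a<n. coeff (OP mu i) a * mu (a + b)) * coeff (OP mu j) b)"
      using ij' by (simp add: A_def H_def scalar_prod_def atLeast0LessThan)
    also have "\<dots> = (\<Sum>a<n. \<Sum>b<n. coeff (OP mu i) a * mu (a + b) * coeff (OP mu j) b)"
      by (simp add: sum_distrib_right) (rule sum.swap)
    also have "\<dots> = Lf mu (OP mu i * OP mu j)"
      by (rule Lf_prod[symmetric]) (use ij' OP_degree[OF pd] in auto)
    finally show "(A * H * transpose_mat A) $$ (i, j) = D $$ (i, j)"
      using ij' by (simp add: D_def)
  qed
  have "det D = prod_list (diag_mat D)"
  proof (rule det_upper_triangular[OF _ DC])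
    show "upper_triangular D"
    proof (rule upper_triangularI)
      fix i j assume "j < i" "i < dim_row D"
      then show "D $$ (i, j) = 0" using OP_orth[OF pd, of "OP mu j" i] OP_degree[OF pd, of j]
        by (simp add: D_def)
    qed
  qed
  also have "diag_mat D = map (\<lambda>j. Lf mu (OP mu j * OP mu j)) [0..<n]"
    by (auto simp: diag_mat_def D_def intro!: map_cong)
  also have "prod_list \<dots> = (\<Prod>j<n. Lf mu (OP mu j * OP mu j))"
    by (simp add: prod.list_conv_set_nth atLeast0LessThan)
  finally have dD: "det D = (\<Prod>j<n. Lf mu (OP mu j * OP mu j))" .
  have "det D = det A * det H * det (transpose_mat A)"
    unfolding prodeq[symmetric]
    using AC HC by (simp add: det_mult[of _ n] mult_carrier_mat[OF AC HC])
  then show ?thesis using dD detA detAT by (simp add: H_def)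
qed


definition pdiff :: "(real \<Rightarrow> real poly) \<Rightarrow> real poly \<Rightarrow> real \<Rightarrow> bool" where
  "pdiff P P' s0 \<longleftrightarrow> (\<forall>i. ((\<lambda>s. coeff (P s) i) has_real_derivative coeff P' i) (at s0))"

lemma pdiff_const: "pdiff (\<lambda>s. p) 0 s0"
  by (simp add: pdiff_def)

lemma pdiff_add: "pdiff P P' s0 \<Longrightarrow> pdiff Q Q' s0 \<Longrightarrow> pdiff (\<lambda>s. P s + Q s) (P' + Q') s0"
  by (auto simp: pdiff_def intro!: DERIV_add)

lemma pdiff_diff: "pdiff P P' s0 \<Longrightarrow> pdiff Q Q' s0 \<Longrightarrow> pdiff (\<lambda>s. P s - Q s) (P' - Q') s0"
  by (auto simp: pdiff_def intro!: DERIV_diff)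

lemma pdiff_sum: "finite A \<Longrightarrow> (\<And>j. j \<in> A \<Longrightarrow> pdiff (P j) (P' j) s0) \<Longrightarrow>
    pdiff (\<lambda>s. \<Sum>j\<in>A. P j s) (\<Sum>j\<in>A. P' j) s0"
  by (induction A rule: finite_induct) (auto intro!: pdiff_add pdiff_const[of 0, simplified])

lemma pdiff_smult:
  assumes f: "(f has_real_derivative f') (at s0)" and P: "pdiff P P' s0"
  shows "pdiff (\<lambda>s. Polynomial.smult (f s) (P s)) (Polynomial.smult f' (P s0) + Polynomial.smult (f s0) P') s0"
  unfolding pdiff_def
proof
  fix i
  have "((\<lambda>s. f s * coeff (P s) i) has_real_derivative f' * coeff (P s0) i + coeff P' i * f s0) (at s0)"
    by (rule DERIV_mult[OF f]) (use P in \<open>simp add: pdiff_def\<close>)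
  then show "((\<lambda>s. coeff (Polynomial.smult (f s) (P s)) i) has_real_derivative
      coeff (Polynomial.smult f' (P s0) + Polynomial.smult (f s0) P') i) (at s0)"
    by (simp add: mult_ac)
qed

lemma pdiff_mult:
  assumes P: "pdiff P P' s0" and Q: "pdiff Q Q' s0"
  shows "pdiff (\<lambda>s. P s * Q s) (P' * Q s0 + P s0 * Q') s0"
  unfolding pdiff_def
proof
  fix i
  have "((\<lambda>s. \<Sum>j\<le>i. coeff (P s) j * coeff (Q s) (i - j)) has_real_derivative
      (\<Sum>j\<le>i. coeff P' j * coeff (Q s0) (i - j) + coeff Q' (i - j) * coeff (P s0) j)) (at s0)"
    by (intro DERIV_sum DERIV_mult) (use P Q in \<open>auto simp: pdiff_def\<close>)
  then show "((\<lambda>s. coeff (P s * Q s) i) has_real_derivative coeff (P' * Q s0 + P s0 * Q') i) (at s0)"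
    by (simp add: coeff_mult sum.distrib mult.commute[of "coeff Q' _" "coeff (P s0) _"])
qed

lemma pdiff_cong_ev:
  assumes "\<forall>\<^sub>F s in nhds s0. P s = Q s" and "pdiff P P' s0"
  shows "pdiff Q P' s0"
  unfolding pdiff_def
proof
  fix i
  have ev: "\<forall>\<^sub>F s in nhds s0. coeff (P s) i = coeff (Q s) i" using assms(1) by eventually_elim simp
  show "((\<lambda>s. coeff (Q s) i) has_real_derivative coeff P' i) (at s0)"
    using assms(2) DERIV_cong_ev[OF refl ev refl, of "coeff P' i"] by (simp add: pdiff_def)
qed

lemma pdiff_coeff_zero:
  assumes ev: "\<forall>\<^sub>F s in nhds s0. coeff (P s) i = v" and P: "pdiff P P' s0"
  shows "coeff P' i = 0"
proof -
  have "((\<lambda>s. coeff (P s) i) has_real_derivative 0) (at s0)"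
    using DERIV_cong_ev[OF refl ev[THEN eventually_mono, of "\<lambda>s. coeff (P s) i = (\<lambda>s. v) s"] refl]
      DERIV_const[of v "at s0"] by simp
  moreover have "((\<lambda>s. coeff (P s) i) has_real_derivative coeff P' i) (at s0)"
    using P by (simp add: pdiff_def)
  ultimately show ?thesis using DERIV_unique by metis
qed

lemma pdiff_deg:
  assumes ev: "\<forall>\<^sub>F s in nhds s0. degree (P s) \<le> N" and P: "pdiff P P' s0"
  shows "degree P' \<le> N"
proof (rule degree_le)
  show "\<forall>i>N. coeff P' i = 0"
  proof (intro allI impI)
    fix i assume i: "N < i"
    have "\<forall>\<^sub>F s in nhds s0. coeff (P s) i = 0"
      using ev by eventually_elim (use i in \<open>auto intro: coeff_eq_0\<close>)
    then show "coeff P' i = 0" by (rule pdiff_coeff_zero[OF _ P])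
  qed
qed

lemma poly_le: fixes p :: "real poly" assumes "degree p \<le> N" shows "poly p x = (\<Sum>i\<le>N. coeff p i * x ^ i)"
  unfolding poly_altdef by (rule sum.mono_neutral_left) (use assms in \<open>auto simp: coeff_eq_0\<close>)

lemma pdiff_poly_ex:
  assumes ev: "\<forall>\<^sub>F s in nhds s0. degree (P s) \<le> N" and P: "pdiff P P' s0"
    and x: "(x has_real_derivative x') (at s0)"
  shows "\<exists>D. ((\<lambda>s. poly (P s) (x s)) has_real_derivative D) (at s0)"
proof -
  have "\<forall>i. \<exists>d. ((\<lambda>s. x s ^ i) has_real_derivative d) (at s0)"
    using DERIV_power[OF x] by blast
  then obtain d where d: "\<And>i. ((\<lambda>s. x s ^ i) has_real_derivative d i) (at s0)" by metis
  have D: "((\<lambda>s. \<Sum>i\<le>N. coeff (P s) i * x s ^ i) has_real_derivative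
      (\<Sum>i\<le>N. coeff P' i * x s0 ^ i + d i * coeff (P s0) i)) (at s0)"
    by (intro DERIV_sum DERIV_mult d) (use P in \<open>auto simp: pdiff_def\<close>)
  have ev2: "\<forall>\<^sub>F s in nhds s0. poly (P s) (x s) = (\<Sum>i\<le>N. coeff (P s) i * x s ^ i)"
    using ev by eventually_elim (rule poly_le)
  have "((\<lambda>s. poly (P s) (x s)) has_real_derivative
      (\<Sum>i\<le>N. coeff P' i * x s0 ^ i + d i * coeff (P s0) i)) (at s0)"
    using DERIV_cong_ev[OF refl ev2 refl] D by simp
  then show ?thesis by blast
qed

locale dset =
  fixes mu :: "real \<Rightarrow> nat \<Rightarrow> real" and s0 c :: real
  assumes ev_pd: "\<forall>\<^sub>F s in nhds s0. posdef (mu s)"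
    and dmu: "\<And>i. ((\<lambda>s. mu s i) has_real_derivative - (c * s0 ^ i)) (at s0)"
begin

lemma pd0: "posdef (mu s0)"
  using ev_pd eventually_nhds_x_imp_x by blast

lemma ev_deg: "\<forall>\<^sub>F s in nhds s0. degree (OP (mu s) n) = n"
  using ev_pd by eventually_elim (rule OP_degree)

lemma Lf_deriv:
  assumes Q: "pdiff Q Q' s0" and ev: "\<forall>\<^sub>F s in nhds s0. degree (Q s) \<le> N"
  shows "((\<lambda>s. Lf (mu s) (Q s)) has_real_derivative (Lf (mu s0) Q' - c * poly (Q s0) s0)) (at s0)"
proof -
  have dQ': "degree Q' \<le> N" by (rule pdiff_deg[OF ev Q])
  have dQ0: "degree (Q s0) \<le> N" using ev eventually_nhds_x_imp_x by blast
  have "((\<lambda>s. \<Sum>i\<le>N. coeff (Q s) i * mu s i) has_real_derivative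
       (\<Sum>i\<le>N. coeff Q' i * mu s0 i + (- (c * s0 ^ i)) * coeff (Q s0) i)) (at s0)"
    by (intro DERIV_sum DERIV_mult dmu) (use Q in \<open>auto simp: pdiff_def\<close>)
  moreover have "(\<Sum>i\<le>N. coeff Q' i * mu s0 i + (- (c * s0 ^ i)) * coeff (Q s0) i) =
      Lf (mu s0) Q' - c * poly (Q s0) s0"
    using Lf_le[OF dQ', of "mu s0"] poly_le[OF dQ0, of s0]
    by (simp add: sum.distrib sum_subtractf sum_distrib_left mult_ac)
  moreover have ev2: "\<forall>\<^sub>F s in nhds s0. Lf (mu s) (Q s) = (\<Sum>i\<le>N. coeff (Q s) i * mu s i)"
    using ev by eventually_elim (rule Lf_le)
  ultimately show ?thesis using DERIV_cong_ev[OF refl ev2 refl] by simp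
qed

lemma OP_pdiff_ex: "\<exists>P'. pdiff (\<lambda>s. OP (mu s) n) P' s0"
proof (induction n rule: less_induct)
  case (less n)
  then have "\<forall>j. \<exists>P'. j < n \<longrightarrow> pdiff (\<lambda>s. OP (mu s) j) P' s0" by blast
  then obtain D where D0: "\<forall>j. j < n \<longrightarrow> pdiff (\<lambda>s. OP (mu s) j) (D j) s0"
    using choice[of "\<lambda>j P'. j < n \<longrightarrow> pdiff (\<lambda>s. OP (mu s) j) P' s0"] by blast
  then have D: "\<And>j. j < n \<Longrightarrow> pdiff (\<lambda>s. OP (mu s) j) (D j) s0" by blast
  define num where "num s j = Lf (mu s) (monom 1 n * OP (mu s) j)" for s j
  define den where "den s j = Lf (mu s) (OP (mu s) j * OP (mu s) j)" for s j
  have dnum: "\<exists>d. ((\<lambda>s. num s j) has_real_derivative d) (at s0)" if j: "j < n" for j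
  proof -
    have pd1: "pdiff (\<lambda>s. monom 1 n * OP (mu s) j) (0 * OP (mu s0) j + monom 1 n * D j) s0"
      by (rule pdiff_mult[OF pdiff_const D[OF j]])
    moreover have "\<forall>\<^sub>F s in nhds s0. degree (monom 1 n * OP (mu s) j) \<le> n + j"
      using ev_deg[of j] by eventually_elim (auto intro: order_trans[OF degree_mult_le] simp: degree_monom_eq)
    ultimately show ?thesis unfolding num_def using Lf_deriv by blast
  qed
  have dden: "\<exists>d. ((\<lambda>s. den s j) has_real_derivative d) (at s0)" if j: "j < n" for j
  proof -
    have "pdiff (\<lambda>s. OP (mu s) j * OP (mu s) j) (D j * OP (mu s0) j + OP (mu s0) j * D j) s0"
      by (rule pdiff_mult[OF D[OF j] D[OF j]])
    moreover have "\<forall>\<^sub>F s in nhds s0. degree (OP (mu s) j * OP (mu s) j) \<le> j + j"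
      using ev_deg[of j] by eventually_elim (auto intro: order_trans[OF degree_mult_le])
    ultimately show ?thesis unfolding den_def using Lf_deriv by blast
  qed
  have dq: "\<exists>d. ((\<lambda>s. num s j / den s j) has_real_derivative d) (at s0)" if j: "j < n" for j
  proof -
    obtain a b where a: "((\<lambda>s. num s j) has_real_derivative a) (at s0)"
      and b: "((\<lambda>s. den s j) has_real_derivative b) (at s0)" using dnum[OF j] dden[OF j] by blast
    have "den s0 j \<noteq> 0" using OP_hpos[OF pd0, of j] by (simp add: den_def)
    then show ?thesis using DERIV_divide[OF a b] by blast
  qed
  then have "\<forall>j. \<exists>d. j < n \<longrightarrow> ((\<lambda>s. num s j / den s j) has_real_derivative d) (at s0)" by blast
  then obtain q' where q'0: "\<forall>j. j < n \<longrightarrow> ((\<lambda>s. num s j / den s j) has_real_derivative q' j) (at s0)"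
    using choice[of "\<lambda>j d. j < n \<longrightarrow> ((\<lambda>s. num s j / den s j) has_real_derivative d) (at s0)"] by blast
  then have q': "\<And>j. j < n \<Longrightarrow> ((\<lambda>s. num s j / den s j) has_real_derivative q' j) (at s0)" by blast
  have pd1: "pdiff (\<lambda>s. monom 1 n - (\<Sum>j<n. Polynomial.smult (num s j / den s j) (OP (mu s) j)))
     (0 - (\<Sum>j<n. Polynomial.smult (q' j) (OP (mu s0) j) + Polynomial.smult (num s0 j / den s0 j) (D j))) s0"
    by (intro pdiff_diff pdiff_const pdiff_sum finite_lessThan) (auto intro!: pdiff_smult q' D)
  have ev1: "\<forall>\<^sub>F s in nhds s0. monom 1 n - (\<Sum>j<n. Polynomial.smult (num s j / den s j) (OP (mu s) j)) = OP (mu s) n"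
    using ev_pd
  proof eventually_elim
    case (elim s)
    show ?case unfolding num_def den_def by (rule OP_GS[OF elim, symmetric])
  qed
  show ?case using pdiff_cong_ev[OF ev1 pd1] by blast
qed

definition OPd :: "nat \<Rightarrow> real poly" where
  "OPd n = (SOME P'. pdiff (\<lambda>s. OP (mu s) n) P' s0)"

lemma OPd: "pdiff (\<lambda>s. OP (mu s) n) (OPd n) s0"
  unfolding OPd_def using OP_pdiff_ex by (rule someI_ex)

lemma OPd_coeff: "i \<ge> n \<Longrightarrow> coeff (OPd n) i = 0"
proof -
  assume i: "i \<ge> n"
  have "\<forall>\<^sub>F s in nhds s0. coeff (OP (mu s) n) i = (if i = n then 1 else 0)"
    using ev_pd
  proof eventually_elim
    case (elim s)
    then show ?case using OP_lead[OF elim] OP_degree[OF elim] i by (auto intro: coeff_eq_0)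
  qed
  then show ?thesis by (rule pdiff_coeff_zero[OF _ OPd])
qed

lemma OPd_small: "n > 0 \<Longrightarrow> degree (OPd n) < n"
proof -
  assume n: "n > 0"
  have "degree (OPd n) \<le> n - 1"
    by (rule degree_le) (use n OPd_coeff in auto)
  then show ?thesis using n by linarith
qed

lemma OPd0: "OPd 0 = 0"
  by (rule poly_eqI) (simp add: OPd_coeff)

lemma OPd_key:
  assumes q: "degree q < n"
  shows "Lf (mu s0) (OPd n * q) = c * poly (OP (mu s0) n) s0 * poly q s0"
proof -
  have P: "pdiff (\<lambda>s. OP (mu s) n * q) (OPd n * q + OP (mu s0) n * 0) s0"
    by (rule pdiff_mult[OF OPd pdiff_const])
  have ev: "\<forall>\<^sub>F s in nhds s0. degree (OP (mu s) n * q) \<le> n + degree q"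
    using ev_deg[of n] by eventually_elim (auto intro: order_trans[OF degree_mult_le])
  have D1: "((\<lambda>s. Lf (mu s) (OP (mu s) n * q)) has_real_derivative
      (Lf (mu s0) (OPd n * q + OP (mu s0) n * 0) - c * poly (OP (mu s0) n * q) s0)) (at s0)"
    by (rule Lf_deriv[OF P ev])
  have ev0: "\<forall>\<^sub>F s in nhds s0. Lf (mu s) (OP (mu s) n * q) = 0"
    using ev_pd by eventually_elim (rule OP_orth[OF _ q])
  have D2: "((\<lambda>s. Lf (mu s) (OP (mu s) n * q)) has_real_derivative 0) (at s0)"
    using DERIV_cong_ev[OF refl ev0 refl, of 0] by simp
  from DERIV_unique[OF D1 D2] show ?thesis by simp
qed

lemma OP_OPd_orth: "Lf (mu s0) (OP (mu s0) n * OPd n) = 0"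
proof (cases "n = 0")
  case True then show ?thesis by (simp add: OPd0)
next
  case False
  then show ?thesis using OP_orth[OF pd0 OPd_small] by simp
qed

lemma h_deriv:
  "((\<lambda>s. Lf (mu s) (OP (mu s) n * OP (mu s) n)) has_real_derivative - (c * (poly (OP (mu s0) n) s0)\<^sup>2)) (at s0)"
proof -
  have P: "pdiff (\<lambda>s. OP (mu s) n * OP (mu s) n) (OPd n * OP (mu s0) n + OP (mu s0) n * OPd n) s0"
    by (rule pdiff_mult[OF OPd OPd])
  have ev: "\<forall>\<^sub>F s in nhds s0. degree (OP (mu s) n * OP (mu s) n) \<le> n + n"
    using ev_deg[of n] by eventually_elim (auto intro: order_trans[OF degree_mult_le])
  have "Lf (mu s0) (OPd n * OP (mu s0) n + OP (mu s0) n * OPd n) = 0"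
    unfolding Lf_add using OP_OPd_orth[of n] Lf_comm[of "mu s0" "OPd n" "OP (mu s0) n"] by linarith
  then show ?thesis using Lf_deriv[OF P ev] by (simp add: power2_eq_square)
qed

definition h0 :: "nat \<Rightarrow> real" where
  "h0 j = Lf (mu s0) (OP (mu s0) j * OP (mu s0) j)"

lemma h0_pos: "h0 j > 0"
  unfolding h0_def by (rule OP_hpos[OF pd0])

lemma pc_deriv:
  assumes n: "n \<ge> 1"
  shows "((\<lambda>s. coeff (OP (mu s) n) (n - 1)) has_real_derivative
     c * poly (OP (mu s0) n) s0 * poly (OP (mu s0) (n - 1)) s0 / h0 (n - 1)) (at s0)"
proof -
  have dq: "degree (OPd n) \<le> n - 1" using OPd_small[of n] n by linarith
  have A: "Lf (mu s0) (OP (mu s0) (n - 1) * OPd n) = coeff (OPd n) (n - 1) * h0 (n - 1)"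
    unfolding h0_def by (rule OP_F4[OF pd0 dq])
  have B: "Lf (mu s0) (OPd n * OP (mu s0) (n - 1)) = c * poly (OP (mu s0) n) s0 * poly (OP (mu s0) (n - 1)) s0"
    by (rule OPd_key) (use n OP_degree[OF pd0] in auto)
  have C: "Lf (mu s0) (OPd n * OP (mu s0) (n - 1)) = Lf (mu s0) (OP (mu s0) (n - 1) * OPd n)" by (rule Lf_comm)
  have "coeff (OPd n) (n - 1) * h0 (n - 1) = c * poly (OP (mu s0) n) s0 * poly (OP (mu s0) (n - 1)) s0"
    using A B C by linarith
  then have "coeff (OPd n) (n - 1) = c * poly (OP (mu s0) n) s0 * poly (OP (mu s0) (n - 1)) s0 / h0 (n - 1)"
    using h0_pos[of "n - 1"] by (simp add: eq_divide_eq)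
  then show ?thesis using OPd[of n, unfolded pdiff_def, THEN spec, of "n - 1"] by simp
qed

lemma poly_deriv_ex:
  assumes x: "(x has_real_derivative x') (at s0)"
  shows "\<exists>D. ((\<lambda>s. poly (OP (mu s) n) (x s)) has_real_derivative D) (at s0)"
proof -
  have "\<forall>\<^sub>F s in nhds s0. degree (OP (mu s) n) \<le> n" using ev_deg[of n] by eventually_elim simp
  then show ?thesis by (rule pdiff_poly_ex[OF _ OPd x])
qed

end


lemma ev_gt: "a < (x::real) \<Longrightarrow> \<forall>\<^sub>F s in nhds x. a < s"
  using eventually_nhds_in_open[of "{a<..}" x] by simp

lemma ev_lt: "(x::real) < b \<Longrightarrow> \<forall>\<^sub>F s in nhds x. s < b"
  using eventually_nhds_in_open[of "{..<b}" x] by simp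

lemma ev_good:
  assumes g: "goodt m t" and k: "k \<in> {1..m}"
  shows "\<forall>\<^sub>F s in nhds (t k). goodt m (t(k := s))"
proof -
  have tk: "t k > 0" using goodt_pos[OF g k] .
  have e1: "\<forall>\<^sub>F s in nhds (t k). 0 < (t(k := s)) 1"
  proof (cases "k = 1")
    case True then show ?thesis using ev_gt[OF tk] by simp
  next
    case False then show ?thesis using g by (simp add: goodt_def)
  qed
  have e2: "\<forall>\<^sub>F s in nhds (t k). \<forall>j\<in>{1..<m}. (t(k := s)) j < (t(k := s)) (Suc j)"
  proof (rule eventually_ball_finite)
    show "finite {1..<m}" by simp
    show "\<forall>j\<in>{1..<m}. \<forall>\<^sub>F s in nhds (t k). (t(k := s)) j < (t(k := s)) (Suc j)"
    proof
      fix j assume j: "j \<in> {1..<m}"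
      have tj: "t j < t (Suc j)" using g j by (simp add: goodt_def)
      show "\<forall>\<^sub>F s in nhds (t k). (t(k := s)) j < (t(k := s)) (Suc j)"
      proof (cases "j = k")
        case True then show ?thesis using ev_lt[of "t k" "t (Suc j)"] tj by simp
      next
        case False
        show ?thesis
        proof (cases "Suc j = k")
          case True then show ?thesis using ev_gt[of "t j" "t k"] tj False by simp
        next
          case False2: False
          then show ?thesis using tj False by simp
        qed
      qed
    qed
  qed
  show ?thesis using e1 e2 by eventually_elim (simp add: goodt_def)
qed

lemma goodt_nonneg: "goodt m t \<Longrightarrow> \<forall>l\<in>{1..m}. t l \<ge> 0"
  using goodt_pos by (auto intro: less_imp_le)

lemma mu_rec:
  assumes a: "\<alpha> > -1" and t: "\<forall>l\<in>{1..m}. t l \<ge> 0"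
  shows "moment \<alpha> m \<omega> t (Suc i) = (real i + 1 + \<alpha>) * moment \<alpha> m \<omega> t i +
           (\<Sum>l=1..m. \<omega> l * t l ^ Suc i * w0 \<alpha> (t l))"
proof -
  have "moment \<alpha> m \<omega> t (Suc i) = \<omega> 0 * Ig \<alpha> (Suc i) 0 + (\<Sum>l=1..m. \<omega> l * Ig \<alpha> (Suc i) (t l))"
    by (rule moment_eq(2)[OF a t])
  also have "\<dots> = \<omega> 0 * ((real i + 1 + \<alpha>) * Ig \<alpha> i 0) +
      (\<Sum>l=1..m. \<omega> l * ((real i + 1 + \<alpha>) * Ig \<alpha> i (t l) + t l ^ Suc i * w0 \<alpha> (t l)))"
    using Ig_rec[OF a, of 0 i] Ig_rec[OF a, of "t l" i for l] t by (simp add: w0_def)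
  also have "\<dots> = (real i + 1 + \<alpha>) * (\<omega> 0 * Ig \<alpha> i 0 + (\<Sum>l=1..m. \<omega> l * Ig \<alpha> i (t l))) +
      (\<Sum>l=1..m. \<omega> l * t l ^ Suc i * w0 \<alpha> (t l))"
    by (simp add: algebra_simps sum.distrib sum_distrib_left)
  also have "\<omega> 0 * Ig \<alpha> i 0 + (\<Sum>l=1..m. \<omega> l * Ig \<alpha> i (t l)) = moment \<alpha> m \<omega> t i"
    by (rule moment_eq(2)[OF a t, symmetric])
  finally show ?thesis .
qed

definition Eq :: "real \<Rightarrow> nat \<Rightarrow> (nat \<Rightarrow> real) \<Rightarrow> (nat \<Rightarrow> real) \<Rightarrow> real poly \<Rightarrow> real" where
  "Eq \<alpha> m \<omega> t q = (\<Sum>l=1..m. \<omega> l * w0 \<alpha> (t l) * t l * poly q (t l))"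

lemma coeff_x_pderiv: "coeff (monom 1 1 * pderiv q) i = of_nat i * coeff q i"
  by (cases i) (auto simp: coeff_monom_mult coeff_pderiv)

lemma coeff_x_pderiv': "coeff (monom 1 (Suc 0) * pderiv q) i = of_nat i * coeff q i"
  using coeff_x_pderiv[of q i] by simp

lemma Lf_rec:
  assumes a: "\<alpha> > -1" and t: "\<forall>l\<in>{1..m}. t l \<ge> 0"
  shows "Lf (moment \<alpha> m \<omega> t) (monom 1 1 * q) =
    (\<alpha> + 1) * Lf (moment \<alpha> m \<omega> t) q + Lf (moment \<alpha> m \<omega> t) (monom 1 1 * pderiv q) + Eq \<alpha> m \<omega> t q"
proof -
  let ?mu = "moment \<alpha> m \<omega> t"
  let ?d = "degree q"
  have "Lf ?mu (monom 1 1 * q) = (\<Sum>i\<le>Suc ?d. coeff (monom 1 1 * q) i * ?mu i)"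
    by (rule Lf_le) (auto intro: order_trans[OF degree_mult_le] simp: degree_monom_eq)
  also have "\<dots> = (\<Sum>i\<le>?d. coeff q i * ?mu (Suc i))"
    by (subst sum.atMost_Suc_shift) (simp add: coeff_monom_mult)
  also have "\<dots> = (\<Sum>i\<le>?d. coeff q i * ((real i + 1 + \<alpha>) * ?mu i + (\<Sum>l=1..m. \<omega> l * t l ^ Suc i * w0 \<alpha> (t l))))"
    using mu_rec[OF a t] by simp
  also have "\<dots> = (\<alpha> + 1) * (\<Sum>i\<le>?d. coeff q i * ?mu i) + (\<Sum>i\<le>?d. (of_nat i * coeff q i) * ?mu i)
      + (\<Sum>l=1..m. \<omega> l * w0 \<alpha> (t l) * t l * (\<Sum>i\<le>?d. coeff q i * t l ^ i))"
    by (simp add: algebra_simps sum.distrib sum_distrib_left sum_distrib_right) (rule sum.swap)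
  also have "(\<Sum>i\<le>?d. coeff q i * ?mu i) = Lf ?mu q" by (simp add: Lf_def)
  also have "(\<Sum>i\<le>?d. (of_nat i * coeff q i) * ?mu i) = Lf ?mu (monom 1 1 * pderiv q)"
  proof -
    have "degree (monom 1 1 * pderiv q) \<le> ?d"
    proof (cases "?d = 0")
      case True
      then have "pderiv q = 0" by (simp add: pderiv_eq_0_iff)
      then show ?thesis by simp
    next
      case False
      have "degree (monom 1 1 * pderiv q) \<le> 1 + degree (pderiv q)"
        using degree_mult_le[of "monom (1::real) 1" "pderiv q"] by (simp add: degree_monom_eq)
      also have "\<dots> \<le> ?d" using False by (simp add: degree_pderiv)
      finally show ?thesis .
    qed
    then show ?thesis by (simp add: Lf_le[of _ ?d] coeff_x_pderiv coeff_x_pderiv')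
  qed
  also have "(\<Sum>l=1..m. \<omega> l * w0 \<alpha> (t l) * t l * (\<Sum>i\<le>?d. coeff q i * t l ^ i)) = Eq \<alpha> m \<omega> t q"
    by (simp add: Eq_def poly_altdef)
  finally show ?thesis .
qed


definition pcf :: "(nat \<Rightarrow> real) \<Rightarrow> nat \<Rightarrow> real" where
  "pcf mu j = coeff (monom 1 1 * OP mu j) j"

lemma pcf_Suc: "pcf mu (Suc j) = coeff (OP mu (Suc j)) j"
  by (simp add: pcf_def coeff_monom_mult)

lemma pcf_0: "pcf mu 0 = 0"
  by (simp add: pcf_def coeff_monom_mult)

locale LS =
  fixes \<alpha> :: real and m :: nat and \<omega> :: "nat \<Rightarrow> real"
  assumes a: "\<alpha> > -1" and w: "\<forall>l\<le>m. (\<Sum>i\<le>l. \<omega> i) \<ge> 0" and w': "\<exists>l\<le>m. (\<Sum>i\<le>l. \<omega> i) > 0"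
begin

context
  fixes t :: "nat \<Rightarrow> real"
  assumes g: "goodt m t"
begin

abbreviation "mu \<equiv> moment \<alpha> m \<omega> t"
abbreviation "P \<equiv> OP mu"
abbreviation "X \<equiv> (monom 1 1 :: real poly)"
abbreviation "hh j \<equiv> Lf mu (P j * P j)"

lemma pd: "posdef mu" by (rule posdef_moment[OF a g w w'])

lemma rec: "Lf mu (X * q) = (\<alpha> + 1) * Lf mu q + Lf mu (X * pderiv q) + Eq \<alpha> m \<omega> t q"
  by (rule Lf_rec[OF a goodt_nonneg[OF g]])

lemma degP: "degree (P j) = j" by (rule OP_degree[OF pd])
lemma leadP: "coeff (P j) j = 1" by (rule OP_lead[OF pd])

lemma deg_xpd: "degree (X * pderiv (P j)) \<le> j"
  by (rule degree_le) (auto simp: coeff_x_pderiv coeff_x_pderiv' coeff_eq_0 degP)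

lemma coeff_xpd: "coeff (X * pderiv (P j)) j = of_nat j"
  by (simp add: coeff_x_pderiv coeff_x_pderiv' leadP)

lemma identB:
  "Eq \<alpha> m \<omega> t (P j * P j) = (pcf mu j - pcf mu (Suc j) - (\<alpha> + 1) - 2 * of_nat j) * hh j"
proof -
  define r where "r = X * P j - P (Suc j)"
  have degr: "degree r \<le> j"
  proof (rule degree_le, intro allI impI)
    fix i assume i: "j < i"
    show "coeff r i = 0"
    proof (cases "i = Suc j")
      case True then show ?thesis by (simp add: r_def coeff_monom_mult leadP)
    next
      case False
      then have "i > Suc j" using i by simp
      then show ?thesis by (simp add: r_def coeff_monom_mult coeff_eq_0 degP)
    qed
  qed
  have cr: "coeff r j = pcf mu j - pcf mu (Suc j)"
    by (simp add: r_def pcf_Suc) (simp add: pcf_def)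
  have L1: "Lf mu (X * (P j * P j)) = (pcf mu j - pcf mu (Suc j)) * hh j"
  proof -
    have "X * (P j * P j) = P j * r + P (Suc j) * P j"
      by (simp add: r_def algebra_simps)
    then have "Lf mu (X * (P j * P j)) = Lf mu (P j * r) + Lf mu (P (Suc j) * P j)"
      by (simp add: Lf_add)
    also have "Lf mu (P (Suc j) * P j) = 0" by (rule OP_orth[OF pd]) (simp add: degP)
    also have "Lf mu (P j * r) = coeff r j * hh j" by (rule OP_F4[OF pd degr])
    finally show ?thesis using cr by simp
  qed
  have L2: "Lf mu (X * pderiv (P j * P j)) = 2 * of_nat j * hh j"
  proof -
    have e: "X * pderiv (P j * P j) = P j * (X * pderiv (P j)) + P j * (X * pderiv (P j))"
      by (simp add: pderiv_mult algebra_simps)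
    have "Lf mu (X * pderiv (P j * P j)) = Lf mu (P j * (X * pderiv (P j))) + Lf mu (P j * (X * pderiv (P j)))"
      unfolding e by (rule Lf_add)
    then have "Lf mu (X * pderiv (P j * P j)) = 2 * Lf mu (P j * (X * pderiv (P j)))"
      by simp
    also have "Lf mu (P j * (X * pderiv (P j))) = of_nat j * hh j"
      using OP_F4[OF pd deg_xpd[of j]] coeff_xpd[of j] by simp
    finally show ?thesis by simp
  qed
  have "Lf mu (X * (P j * P j)) = (\<alpha> + 1) * hh j + Lf mu (X * pderiv (P j * P j)) + Eq \<alpha> m \<omega> t (P j * P j)"
    by (rule rec)
  then show ?thesis using L1 L2 by (simp add: algebra_simps)
qed

lemma identA:
  assumes n: "n \<ge> 1"
  shows "hh n = - pcf mu n * hh (n - 1) + Eq \<alpha> m \<omega> t (P n * P (n - 1))"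
proof -
  let ?Q = "P (n - 1)"
  have sn: "Suc (n - 1) = n" using n by simp
  have A1: "Lf mu (X * (P n * ?Q)) = hh n"
  proof -
    have dq: "degree (X * ?Q) \<le> n"
      using degree_mult_le[of X ?Q] n by (simp add: degree_monom_eq degP)
    have cq: "coeff (X * ?Q) n = 1"
      using n by (simp add: coeff_monom_mult leadP)
    have "Lf mu (P n * (X * ?Q)) = hh n" using OP_F4[OF pd dq] cq by simp
    then show ?thesis by (simp add: mult_ac)
  qed
  have A2: "Lf mu (P n * ?Q) = 0" by (rule OP_orth[OF pd]) (use n degP in auto)
  define r where "r = X * pderiv (P n) - Polynomial.smult (of_nat n) (P n)"
  have degr: "degree r \<le> n - 1"
  proof (rule degree_le, intro allI impI)
    fix i assume i: "n - 1 < i"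
    show "coeff r i = 0"
    proof (cases "i = n")
      case True then show ?thesis by (simp add: r_def coeff_x_pderiv' leadP)
    next
      case False
      then have "i > n" using i by simp
      then show ?thesis by (simp add: r_def coeff_x_pderiv' coeff_eq_0 degP)
    qed
  qed
  have cr: "coeff r (n - 1) = - pcf mu n"
  proof -
    have "pcf mu n = coeff (P n) (n - 1)" using pcf_Suc[of mu "n - 1"] sn by simp
    moreover have "coeff r (n - 1) = of_nat (n - 1) * coeff (P n) (n - 1) - of_nat n * coeff (P n) (n - 1)"
      by (simp add: r_def coeff_x_pderiv')
    moreover have "real (n - 1) = real n - 1" using n by simp
    ultimately show ?thesis by (simp add: algebra_simps)
  qed
  have A3: "Lf mu (X * pderiv (P n * ?Q)) = - pcf mu n * hh (n - 1)"
  proof -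
    have e: "X * pderiv (P n * ?Q) = P n * (X * pderiv ?Q) + (?Q * r + Polynomial.smult (of_nat n) (?Q * P n))"
      by (simp add: pderiv_mult r_def algebra_simps)
    have z1: "Lf mu (P n * (X * pderiv ?Q)) = 0"
    proof (rule OP_orth[OF pd])
      show "degree (X * pderiv ?Q) < n" using deg_xpd[of "n - 1"] n by linarith
    qed
    have z2: "Lf mu (?Q * P n) = 0"
      using A2 by (simp add: mult.commute)
    have z3: "Lf mu (?Q * r) = - pcf mu n * hh (n - 1)"
      using OP_F4[OF pd degr] cr by simp
    show ?thesis unfolding e Lf_add Lf_smult z1 z2 z3 by simp
  qed
  have "Lf mu (X * (P n * ?Q)) = (\<alpha> + 1) * Lf mu (P n * ?Q) + Lf mu (X * pderiv (P n * ?Q)) + Eq \<alpha> m \<omega> t (P n * ?Q)"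
    by (rule rec)
  then show ?thesis using A1 A2 A3 by simp
qed

lemma identC:
  "(\<Sum>j<n. Eq \<alpha> m \<omega> t (P j * P j) / hh j) = - pcf mu n - real n * (real n + \<alpha>)"
proof (induction n)
  case 0 then show ?case by (simp add: pcf_0)
next
  case (Suc n)
  have hpos: "hh n > 0" by (rule OP_hpos[OF pd])
  have "Eq \<alpha> m \<omega> t (P n * P n) / hh n = pcf mu n - pcf mu (Suc n) - (\<alpha> + 1) - 2 * real n"
    using identB[of n] hpos by simp
  then show ?case using Suc by (simp add: algebra_simps)
qed

end

end


context LS
begin

lemma opoly_eq:
  assumes g: "goodt m t"
  shows "opoly \<alpha> m \<omega> t n = OP (moment \<alpha> m \<omega> t) n"
proof -
  have tn: "\<forall>l\<in>{1..m}. t l \<ge> 0" by (rule goodt_nonneg[OF g])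
  have "(\<lambda>p. degree p = n \<and> lead_coeff p = 1 \<and>
     (\<forall>j<n. (LINT x:{0..}|lborel. poly p x * x ^ j * wgt \<alpha> m \<omega> t x) = 0)) = isOP (moment \<alpha> m \<omega> t) n"
  proof (rule ext)
    fix p :: "real poly"
    have "(LINT x:{0..}|lborel. poly p x * x ^ j * wgt \<alpha> m \<omega> t x) = Lf (moment \<alpha> m \<omega> t) (p * monom 1 j)" for j
      using LINT_poly[OF a tn, of "p * monom 1 j" \<omega>] by (simp add: poly_monom mult_ac)
    then show "(degree p = n \<and> lead_coeff p = 1 \<and>
     (\<forall>j<n. (LINT x:{0..}|lborel. poly p x * x ^ j * wgt \<alpha> m \<omega> t x) = 0)) = isOP (moment \<alpha> m \<omega> t) n p"
      by (auto simp: isOP_def)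
  qed
  then show ?thesis by (simp add: opoly_def OP_def)
qed

lemma hnorm_eq:
  assumes g: "goodt m t"
  shows "hnorm \<alpha> m \<omega> t n = Lf (moment \<alpha> m \<omega> t) (OP (moment \<alpha> m \<omega> t) n * OP (moment \<alpha> m \<omega> t) n)"
proof -
  have tn: "\<forall>l\<in>{1..m}. t l \<ge> 0" by (rule goodt_nonneg[OF g])
  show ?thesis
    using LINT_poly[OF a tn, of "OP (moment \<alpha> m \<omega> t) n * OP (moment \<alpha> m \<omega> t) n" \<omega>]
    by (simp add: hnorm_def opoly_eq[OF g] power2_eq_square)
qed

lemma hnorm_pos: "goodt m t \<Longrightarrow> hnorm \<alpha> m \<omega> t n > 0"
  using hnorm_eq OP_hpos[OF pd] by simp

lemma hankel_eq:
  assumes g: "goodt m t"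
  shows "hankelD \<alpha> m \<omega> n t = (\<Prod>j<n. hnorm \<alpha> m \<omega> t j)"
  unfolding hankelD_def using hankel_det[OF pd[OF g], of n] hnorm_eq[OF g] by simp

lemma dset_inst:
  assumes g: "goodt m t" and k: "k \<in> {1..m}"
  shows "dset (\<lambda>s. moment \<alpha> m \<omega> (t(k := s))) (t k) (\<omega> k * w0 \<alpha> (t k))"
proof
  show "\<forall>\<^sub>F s in nhds (t k). posdef (moment \<alpha> m \<omega> (t(k := s)))"
    using ev_good[OF g k] by eventually_elim (rule pd)
next
  fix i
  have tk: "t k > 0" by (rule goodt_pos[OF g k])
  have ev: "\<forall>\<^sub>F s in nhds (t k). moment \<alpha> m \<omega> (t(k := s)) i =
      \<omega> 0 * Ig \<alpha> i 0 + (\<Sum>l=1..m. \<omega> l * Ig \<alpha> i ((t(k := s)) l))"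
    using ev_good[OF g k] by eventually_elim (rule moment_eq(2)[OF a goodt_nonneg])
  have "((\<lambda>s. \<Sum>l=1..m. \<omega> l * Ig \<alpha> i ((t(k := s)) l)) has_real_derivative
      (\<Sum>l=1..m. if l = k then \<omega> l * - (t k ^ i * w0 \<alpha> (t k)) else 0)) (at (t k))"
  proof (rule DERIV_sum)
    fix l assume "l \<in> {1..m}"
    show "((\<lambda>s. \<omega> l * Ig \<alpha> i ((t(k := s)) l)) has_real_derivative
      (if l = k then \<omega> l * - (t k ^ i * w0 \<alpha> (t k)) else 0)) (at (t k))"
    proof (cases "l = k")
      case True
      then show ?thesis using DERIV_cmult[OF Ig_deriv[OF a tk, of i], of "\<omega> l"] by simp
    next
      case False
      then show ?thesis by simp
    qed
  qed
  also have "(\<Sum>l=1..m. if l = k then \<omega> l * - (t k ^ i * w0 \<alpha> (t k)) else 0) = - (\<omega> k * w0 \<alpha> (t k) * t k ^ i)"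
    using k by (simp add: sum.delta')
  finally have "((\<lambda>s. \<omega> 0 * Ig \<alpha> i 0 + (\<Sum>l=1..m. \<omega> l * Ig \<alpha> i ((t(k := s)) l))) has_real_derivative
      - (\<omega> k * w0 \<alpha> (t k) * t k ^ i)) (at (t k))"
    using DERIV_add[OF DERIV_const] by fastforce
  then show "((\<lambda>s. moment \<alpha> m \<omega> (t(k := s)) i) has_real_derivative - (\<omega> k * w0 \<alpha> (t k) * t k ^ i)) (at (t k))"
    using DERIV_cong_ev[OF refl ev refl] by simp
qed

lemma pd_lnD:
  assumes g: "goodt m t" and k: "k \<in> {1..m}"
  shows "pd (\<lambda>s. ln (hankelD \<alpha> m \<omega> n s)) k t =
    - (\<omega> k * w0 \<alpha> (t k)) * (\<Sum>j<n. (poly (OP (moment \<alpha> m \<omega> t) j) (t k))\<^sup>2 / hnorm \<alpha> m \<omega> t j)"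
proof -
  interpret D: dset "\<lambda>s. moment \<alpha> m \<omega> (t(k := s))" "t k" "\<omega> k * w0 \<alpha> (t k)"
    by (rule dset_inst[OF g k])
  define H where "H j s = Lf (moment \<alpha> m \<omega> (t(k := s))) (OP (moment \<alpha> m \<omega> (t(k := s))) j * OP (moment \<alpha> m \<omega> (t(k := s))) j)" for j s
  have ev: "\<forall>\<^sub>F s in nhds (t k). ln (hankelD \<alpha> m \<omega> n (t(k := s))) = (\<Sum>j<n. ln (H j s))"
    using ev_good[OF g k]
  proof eventually_elim
    case (elim s)
    have e: "hankelD \<alpha> m \<omega> n (t(k := s)) = (\<Prod>j<n. H j s)"
      using hankel_eq[OF elim] hnorm_eq[OF elim] by (simp add: H_def)
    have "H j s > 0" for j using hnorm_pos[OF elim, of j] hnorm_eq[OF elim, of j] by (simp add: H_def)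
    then have nz: "H j s \<noteq> 0" for j by (metis less_irrefl)
    show ?case unfolding e by (rule ln_prod) (use nz in auto)
  qed
  have Ht: "H j (t k) = hnorm \<alpha> m \<omega> t j" for j using hnorm_eq[OF g, of j] by (simp add: H_def)
  have "((\<lambda>s. \<Sum>j<n. ln (H j s)) has_real_derivative
      (\<Sum>j<n. inverse (H j (t k)) * - (\<omega> k * w0 \<alpha> (t k) * (poly (OP (moment \<alpha> m \<omega> t) j) (t k))\<^sup>2))) (at (t k))"
  proof (rule DERIV_sum)
    fix j assume "j \<in> {..<n}"
    have hd: "((\<lambda>s. H j s) has_real_derivative - (\<omega> k * w0 \<alpha> (t k) * (poly (OP (moment \<alpha> m \<omega> t) j) (t k))\<^sup>2)) (at (t k))"
      using D.h_deriv[of j] by (simp add: H_def)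
    have "H j (t k) > 0" using Ht hnorm_pos[OF g] by simp
    then show "((\<lambda>s. ln (H j s)) has_real_derivative inverse (H j (t k)) * - (\<omega> k * w0 \<alpha> (t k) * (poly (OP (moment \<alpha> m \<omega> t) j) (t k))\<^sup>2)) (at (t k))"
      by (rule DERIV_chain2[OF DERIV_ln hd])
  qed
  then have "((\<lambda>s. ln (hankelD \<alpha> m \<omega> n (t(k := s)))) has_real_derivative
      (\<Sum>j<n. inverse (H j (t k)) * - (\<omega> k * w0 \<alpha> (t k) * (poly (OP (moment \<alpha> m \<omega> t) j) (t k))\<^sup>2))) (at (t k))"
    using DERIV_cong_ev[OF refl ev refl] by simp
  then have "pd (\<lambda>s. ln (hankelD \<alpha> m \<omega> n s)) k t =
      (\<Sum>j<n. inverse (H j (t k)) * - (\<omega> k * w0 \<alpha> (t k) * (poly (OP (moment \<alpha> m \<omega> t) j) (t k))\<^sup>2))"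
    unfolding pd_def by (rule DERIV_imp_deriv)
  also have "\<dots> = - (\<omega> k * w0 \<alpha> (t k)) * (\<Sum>j<n. (poly (OP (moment \<alpha> m \<omega> t) j) (t k))\<^sup>2 / hnorm \<alpha> m \<omega> t j)"
    by (simp add: Ht sum_distrib_left field_simps)
  finally show ?thesis .
qed

lemma sigma_eq:
  assumes g: "goodt m t"
  shows "sigman \<alpha> m \<omega> n t = pcf (moment \<alpha> m \<omega> t) n + real n * (real n + \<alpha>)"
proof -
  let ?P = "OP (moment \<alpha> m \<omega> t)"
  have "sigman \<alpha> m \<omega> n t = (\<Sum>k=1..m. t k * (- (\<omega> k * w0 \<alpha> (t k)) * (\<Sum>j<n. (poly (?P j) (t k))\<^sup>2 / hnorm \<alpha> m \<omega> t j)))"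
    unfolding sigman_def by (rule sum.cong) (auto simp: pd_lnD[OF g])
  also have "\<dots> = - (\<Sum>j<n. Eq \<alpha> m \<omega> t (?P j * ?P j) / hnorm \<alpha> m \<omega> t j)"
    by (simp add: Eq_def sum_distrib_left sum_distrib_right sum_divide_distrib power2_eq_square
        sum_negf[symmetric] mult_ac) (rule sum.swap)
  also have "\<dots> = pcf (moment \<alpha> m \<omega> t) n + real n * (real n + \<alpha>)"
    using identC[OF g, of n] hnorm_eq[OF g] by simp
  finally show ?thesis .
qed

lemma pcf_n: "n \<ge> 1 \<Longrightarrow> pcf nu n = coeff (OP nu n) (n - 1)"
  using pcf_Suc[of nu "n - 1"] by simp

lemma part1_deriv:
  assumes g: "goodt m t" and k: "k \<in> {1..m}" and n: "n \<ge> 1"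
  shows "((\<lambda>s. sigman \<alpha> m \<omega> n (t(k := s))) has_real_derivative rnk \<alpha> m \<omega> n k t) (at (t k))"
proof -
  interpret D: dset "\<lambda>s. moment \<alpha> m \<omega> (t(k := s))" "t k" "\<omega> k * w0 \<alpha> (t k)"
    by (rule dset_inst[OF g k])
  have ev: "\<forall>\<^sub>F s in nhds (t k). sigman \<alpha> m \<omega> n (t(k := s)) =
      coeff (OP (moment \<alpha> m \<omega> (t(k := s))) n) (n - 1) + real n * (real n + \<alpha>)"
    using ev_good[OF g k] by eventually_elim (simp add: sigma_eq pcf_n[OF n])
  have h0: "D.h0 (n - 1) = hnorm \<alpha> m \<omega> t (n - 1)"
    using hnorm_eq[OF g] by (simp add: D.h0_def)
  have "((\<lambda>s. coeff (OP (moment \<alpha> m \<omega> (t(k := s))) n) (n - 1) + real n * (real n + \<alpha>)) has_real_derivative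
      \<omega> k * w0 \<alpha> (t k) * poly (OP (moment \<alpha> m \<omega> t) n) (t k) * poly (OP (moment \<alpha> m \<omega> t) (n - 1)) (t k) / hnorm \<alpha> m \<omega> t (n - 1) + 0) (at (t k))"
    using DERIV_add[OF D.pc_deriv[OF n] DERIV_const] h0 by simp
  then have "((\<lambda>s. sigman \<alpha> m \<omega> n (t(k := s))) has_real_derivative
      \<omega> k * w0 \<alpha> (t k) * poly (OP (moment \<alpha> m \<omega> t) n) (t k) * poly (OP (moment \<alpha> m \<omega> t) (n - 1)) (t k) / hnorm \<alpha> m \<omega> t (n - 1)) (at (t k))"
    using DERIV_cong_ev[OF refl ev refl] by simp
  then show ?thesis by (simp add: rnk_def opoly_eq[OF g])
qed

lemma part1:
  assumes g: "goodt m t" and k: "k \<in> {1..m}" and n: "n \<ge> 1"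
  shows "pd (sigman \<alpha> m \<omega> n) k t = rnk \<alpha> m \<omega> n k t"
  unfolding pd_def by (rule DERIV_imp_deriv[OF part1_deriv[OF g k n]])

lemma part2:
  assumes g: "goodt m t" and n: "n \<ge> 1"
  shows "betan \<alpha> m \<omega> n t = (\<Sum>j=1..m. t j * pd (sigman \<alpha> m \<omega> n) j t)
          - sigman \<alpha> m \<omega> n t + real n * (real n + \<alpha>)"
proof -
  let ?P = "OP (moment \<alpha> m \<omega> t)"
  have h1: "hnorm \<alpha> m \<omega> t (n - 1) > 0" by (rule hnorm_pos[OF g])
  have "(\<Sum>j=1..m. t j * pd (sigman \<alpha> m \<omega> n) j t) = (\<Sum>j=1..m. t j * rnk \<alpha> m \<omega> n j t)"
    by (rule sum.cong) (auto simp: part1[OF g _ n])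
  also have "\<dots> = Eq \<alpha> m \<omega> t (?P n * ?P (n - 1)) / hnorm \<alpha> m \<omega> t (n - 1)"
    by (simp add: rnk_def Eq_def opoly_eq[OF g] sum_divide_distrib mult_ac)
  also have "\<dots> = (hnorm \<alpha> m \<omega> t n + pcf (moment \<alpha> m \<omega> t) n * hnorm \<alpha> m \<omega> t (n - 1)) / hnorm \<alpha> m \<omega> t (n - 1)"
    using identA[OF g n] hnorm_eq[OF g] by simp
  also have "\<dots> = betan \<alpha> m \<omega> n t + pcf (moment \<alpha> m \<omega> t) n"
    using h1 by (simp add: betan_def add_divide_distrib)
  finally show ?thesis using sigma_eq[OF g, of n] by simp
qed

lemma beta_deriv:
  assumes g: "goodt m t" and k: "k \<in> {1..m}"
  shows "((\<lambda>s. betan \<alpha> m \<omega> n (t(k := s))) has_real_derivative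
    (- (\<omega> k * w0 \<alpha> (t k) * (poly (opoly \<alpha> m \<omega> t n) (t k))\<^sup>2) * hnorm \<alpha> m \<omega> t (n - 1) -
      hnorm \<alpha> m \<omega> t n * - (\<omega> k * w0 \<alpha> (t k) * (poly (opoly \<alpha> m \<omega> t (n - 1)) (t k))\<^sup>2)) /
    (hnorm \<alpha> m \<omega> t (n - 1) * hnorm \<alpha> m \<omega> t (n - 1))) (at (t k))"
proof -
  interpret D: dset "\<lambda>s. moment \<alpha> m \<omega> (t(k := s))" "t k" "\<omega> k * w0 \<alpha> (t k)"
    by (rule dset_inst[OF g k])
  define H where "H j s = Lf (moment \<alpha> m \<omega> (t(k := s))) (OP (moment \<alpha> m \<omega> (t(k := s))) j * OP (moment \<alpha> m \<omega> (t(k := s))) j)" for j s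
  have ev: "\<forall>\<^sub>F s in nhds (t k). betan \<alpha> m \<omega> n (t(k := s)) = H n s / H (n - 1) s"
    using ev_good[OF g k] by eventually_elim (simp add: betan_def hnorm_eq H_def)
  have Ht: "H j (t k) = hnorm \<alpha> m \<omega> t j" for j using hnorm_eq[OF g, of j] by (simp add: H_def)
  have hd: "((\<lambda>s. H j s) has_real_derivative - (\<omega> k * w0 \<alpha> (t k) * (poly (opoly \<alpha> m \<omega> t j) (t k))\<^sup>2)) (at (t k))" for j
    using D.h_deriv[of j] by (simp add: H_def opoly_eq[OF g])
  have nz: "H (n - 1) (t k) \<noteq> 0" using Ht hnorm_pos[OF g, of "n - 1"] by simp
  have "((\<lambda>s. H n s / H (n - 1) s) has_real_derivative
    (- (\<omega> k * w0 \<alpha> (t k) * (poly (opoly \<alpha> m \<omega> t n) (t k))\<^sup>2) * H (n - 1) (t k) -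
      H n (t k) * - (\<omega> k * w0 \<alpha> (t k) * (poly (opoly \<alpha> m \<omega> t (n - 1)) (t k))\<^sup>2)) /
    (H (n - 1) (t k) * H (n - 1) (t k))) (at (t k))"
    by (rule DERIV_divide[OF hd hd nz])
  then show ?thesis unfolding Ht using DERIV_cong_ev[OF refl ev refl] by simp
qed

lemma w0_deriv_ex: "y > 0 \<Longrightarrow> \<exists>D. (w0 \<alpha> has_real_derivative D) (at y)"
  unfolding w0_def[abs_def] by (auto intro!: derivative_eq_intros)

lemma upd_deriv: "((\<lambda>s. (t(k := s)) j) has_real_derivative (if j = k then 1 else 0)) (at x)"
  by (cases "j = k") auto

lemma rnk_deriv_ex:
  assumes g: "goodt m t" and k: "k \<in> {1..m}" and j: "j \<in> {1..m}" and n: "n \<ge> 1"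
  shows "\<exists>D. ((\<lambda>s. pd (sigman \<alpha> m \<omega> n) j (t(k := s))) has_real_derivative D) (at (t k))"
proof -
  interpret D: dset "\<lambda>s. moment \<alpha> m \<omega> (t(k := s))" "t k" "\<omega> k * w0 \<alpha> (t k)"
    by (rule dset_inst[OF g k])
  define H where "H j s = Lf (moment \<alpha> m \<omega> (t(k := s))) (OP (moment \<alpha> m \<omega> (t(k := s))) j * OP (moment \<alpha> m \<omega> (t(k := s))) j)" for j s
  define x where "x s = (t(k := s)) j" for s
  define f where "f s = \<omega> j * w0 \<alpha> (x s) / H (n - 1) s * poly (OP (moment \<alpha> m \<omega> (t(k := s))) n) (x s) *
      poly (OP (moment \<alpha> m \<omega> (t(k := s))) (n - 1)) (x s)" for s
  have ev: "\<forall>\<^sub>F s in nhds (t k). pd (sigman \<alpha> m \<omega> n) j (t(k := s)) = f s"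
    using ev_good[OF g k]
  proof eventually_elim
    case (elim s)
    show ?case using part1[OF elim j n] hnorm_eq[OF elim] opoly_eq[OF elim]
      by (simp add: rnk_def f_def H_def x_def)
  qed
  have xd: "(x has_real_derivative (if j = k then 1 else 0)) (at (t k))"
    unfolding x_def[abs_def] by (rule upd_deriv)
  have xt: "x (t k) = t j" by (simp add: x_def)
  have tj: "t j > 0" by (rule goodt_pos[OF g j])
  obtain dw where dw: "(w0 \<alpha> has_real_derivative dw) (at (x (t k)))" using w0_deriv_ex[OF tj] xt by auto
  obtain d1 where d1: "((\<lambda>s. poly (OP (moment \<alpha> m \<omega> (t(k := s))) n) (x s)) has_real_derivative d1) (at (t k))"
    using D.poly_deriv_ex[OF xd] by blast
  obtain d2 where d2: "((\<lambda>s. poly (OP (moment \<alpha> m \<omega> (t(k := s))) (n - 1)) (x s)) has_real_derivative d2) (at (t k))"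
    using D.poly_deriv_ex[OF xd] by blast
  have hd: "((\<lambda>s. H (n - 1) s) has_real_derivative - (\<omega> k * w0 \<alpha> (t k) * (poly (OP (moment \<alpha> m \<omega> t) (n - 1)) (t k))\<^sup>2)) (at (t k))"
    using D.h_deriv[of "n - 1"] by (simp add: H_def)
  have nz: "H (n - 1) (t k) \<noteq> 0" using hnorm_eq[OF g, of "n - 1"] hnorm_pos[OF g, of "n - 1"] by (simp add: H_def)
  have wd: "((\<lambda>s. w0 \<alpha> (x s)) has_real_derivative dw * (if j = k then 1 else 0)) (at (t k))"
    by (rule DERIV_chain2[OF dw xd])
  have a1: "((\<lambda>s. \<omega> j * w0 \<alpha> (x s)) has_real_derivative \<omega> j * (dw * (if j = k then 1 else 0))) (at (t k))"
    by (rule DERIV_cmult[OF wd])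
  note a2 = DERIV_divide[OF a1 hd nz]
  note a3 = DERIV_mult[OF a2 d1]
  note a4 = DERIV_mult[OF a3 d2]
  have "\<exists>D. (f has_real_derivative D) (at (t k))"
    unfolding f_def[abs_def] using a4 by blast
  then show ?thesis using DERIV_cong_ev[OF refl ev refl] by auto
qed

lemma part3:
  assumes g: "goodt m t" and k: "k \<in> {1..m}" and n: "n \<ge> 1"
  shows "pd (betan \<alpha> m \<omega> n) k t = (\<Sum>j=1..m. t j * pd (pd (sigman \<alpha> m \<omega> n) j) k t)"
proof -
  define gg where "gg j s = pd (sigman \<alpha> m \<omega> n) j (t(k := s))" for j s
  define G where "G j = pd (pd (sigman \<alpha> m \<omega> n) j) k t" for j
  have Gd: "((\<lambda>s. gg j s) has_real_derivative G j) (at (t k))" if j: "j \<in> {1..m}" for j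
  proof -
    obtain D where D: "((\<lambda>s. gg j s) has_real_derivative D) (at (t k))"
      using rnk_deriv_ex[OF g k j n] unfolding gg_def by blast
    have "G j = deriv (\<lambda>s. gg j s) (t k)" unfolding G_def gg_def by (rule pd_def)
    then have "G j = D" using DERIV_imp_deriv[OF D] by simp
    then show ?thesis using D by simp
  qed
  have ev: "\<forall>\<^sub>F s in nhds (t k). betan \<alpha> m \<omega> n (t(k := s)) =
      (\<Sum>j=1..m. (t(k := s)) j * gg j s) - sigman \<alpha> m \<omega> n (t(k := s)) + real n * (real n + \<alpha>)"
    using ev_good[OF g k] by eventually_elim (simp add: part2[OF _ n] gg_def)
  have sd: "((\<lambda>s. sigman \<alpha> m \<omega> n (t(k := s))) has_real_derivative gg k (t k)) (at (t k))"
    using part1_deriv[OF g k n] part1[OF g k n] by (simp add: gg_def)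
  have "((\<lambda>s. (\<Sum>j=1..m. (t(k := s)) j * gg j s) - sigman \<alpha> m \<omega> n (t(k := s)) + real n * (real n + \<alpha>))
      has_real_derivative (\<Sum>j=1..m. (if j = k then 1 else 0) * gg j (t k) + G j * (t(k := t k)) j) - gg k (t k) + 0) (at (t k))"
    by (intro DERIV_add DERIV_diff DERIV_sum DERIV_mult upd_deriv Gd sd DERIV_const) auto
  moreover have "(\<Sum>j=1..m. (if j = k then 1 else 0) * gg j (t k) + G j * (t(k := t k)) j) - gg k (t k) + 0 =
      (\<Sum>j=1..m. t j * G j)"
  proof -
    have "(\<Sum>j=1..m. (if j = k then 1 else 0) * gg j (t k)) = gg k (t k)"
      using k by (subst sum.remove[of _ k]) auto
    then show ?thesis by (simp add: sum.distrib mult.commute)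
  qed
  ultimately have "((\<lambda>s. betan \<alpha> m \<omega> n (t(k := s))) has_real_derivative (\<Sum>j=1..m. t j * G j)) (at (t k))"
    using DERIV_cong_ev[OF refl ev refl] by simp
  then have "pd (betan \<alpha> m \<omega> n) k t = (\<Sum>j=1..m. t j * G j)"
    unfolding pd_def[of "betan \<alpha> m \<omega> n" k t] by (rule DERIV_imp_deriv)
  then show ?thesis by (simp add: G_def)
qed

end


lemma alg4:
  fixes \<omega> W a b h1 h0 :: real
  assumes W: "W > 0" and h1: "h1 > 0" and h0: "h0 > 0"
  shows "\<omega> * W / h1 * a\<^sup>2 = 1 / (2 * (h1 / h0)) *
    (- ((- (\<omega> * W * a\<^sup>2) * h0 - h1 * - (\<omega> * W * b\<^sup>2)) / (h0 * h0)) + sgn \<omega> *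
      sqrt (((- (\<omega> * W * a\<^sup>2) * h0 - h1 * - (\<omega> * W * b\<^sup>2)) / (h0 * h0))\<^sup>2 +
        4 * (h1 / h0) * (\<omega> * W / h0 * a * b)\<^sup>2))"
proof -
  define c where "c = \<omega> * W"
  define \<beta> where "\<beta> = h1 / h0"
  define R where "R = c / h1 * a\<^sup>2"
  define Rm where "Rm = c / h0 * b\<^sup>2"
  define B where "B = (- (c * a\<^sup>2) * h0 - h1 * - (c * b\<^sup>2)) / (h0 * h0)"
  define r where "r = c / h0 * a * b"
  have bpos: "\<beta> > 0" using h1 h0 by (simp add: \<beta>_def)
  have eB: "B = \<beta> * (Rm - R)"
    using h1 h0 by (simp add: B_def \<beta>_def Rm_def R_def field_simps power2_eq_square)
  have eS: "B\<^sup>2 + 4 * \<beta> * r\<^sup>2 = (\<beta> * (Rm + R))\<^sup>2"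
    using h1 h0 by (simp add: eB r_def \<beta>_def Rm_def R_def field_simps power2_eq_square)
  have sq: "sqrt (B\<^sup>2 + 4 * \<beta> * r\<^sup>2) = \<beta> * \<bar>Rm + R\<bar>"
    unfolding eS using bpos by (simp add: abs_mult)
  define A where "A = W / h0 * b\<^sup>2 + W / h1 * a\<^sup>2"
  have A0: "A \<ge> 0" using W h0 h1 by (simp add: A_def)
  have eA: "Rm + R = \<omega> * A" by (simp add: A_def Rm_def R_def c_def field_simps)
  have sg: "sgn \<omega> * \<bar>Rm + R\<bar> = Rm + R"
    unfolding eA using A0 by (simp add: abs_mult sgn_mult_abs mult.assoc[symmetric])
  have "1 / (2 * \<beta>) * (- B + sgn \<omega> * sqrt (B\<^sup>2 + 4 * \<beta> * r\<^sup>2)) = 1 / (2 * \<beta>) * (- B + \<beta> * (sgn \<omega> * \<bar>Rm + R\<bar>))"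
    unfolding sq by (simp add: mult_ac)
  also have "\<dots> = R" unfolding sg eB using bpos by (simp add: field_simps)
  finally show ?thesis by (simp add: c_def \<beta>_def R_def B_def r_def)
qed

theorem lemma2p10:
  fixes m n k :: nat and \<alpha> :: real and t \<omega> :: "nat \<Rightarrow> real"
  assumes "m \<ge> 1" and "\<alpha> > -1"
    and "0 < t 1" and "\<forall>j\<in>{1..<m}. t j < t (Suc j)"
    and "\<forall>l\<le>m. (\<Sum>i\<le>l. \<omega> i) \<ge> 0"
    and "\<exists>l\<le>m. (\<Sum>i\<le>l. \<omega> i) > 0"
    and "n \<ge> 1" and "k \<in> {1..m}"
  shows "rnk \<alpha> m \<omega> n k t = pd (sigman \<alpha> m \<omega> n) k t
    \<and> betan \<alpha> m \<omega> n t = (\<Sum>j=1..m. t j * pd (sigman \<alpha> m \<omega> n) j t)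
          - sigman \<alpha> m \<omega> n t + real n * (real n + \<alpha>)
    \<and> pd (betan \<alpha> m \<omega> n) k t = (\<Sum>j=1..m. t j * pd (pd (sigman \<alpha> m \<omega> n) j) k t)
    \<and> Rnk \<alpha> m \<omega> n k t = 1 / (2 * betan \<alpha> m \<omega> n t) *
        (- pd (betan \<alpha> m \<omega> n) k t + sgn (\<omega> k) *
           sqrt ((pd (betan \<alpha> m \<omega> n) k t)\<^sup>2 + 4 * betan \<alpha> m \<omega> n t * (rnk \<alpha> m \<omega> n k t)\<^sup>2))"
proof -
  have g: "goodt m t" using assms(3,4) by (simp add: goodt_def)
  interpret LS \<alpha> m \<omega> by unfold_locales (use assms(2,5,6) in auto)
  have n: "n \<ge> 1" and k: "k \<in> {1..m}" using assms(7,8) by auto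
  have c1: "rnk \<alpha> m \<omega> n k t = pd (sigman \<alpha> m \<omega> n) k t" using part1[OF g k n] by simp
  have c2: "betan \<alpha> m \<omega> n t = (\<Sum>j=1..m. t j * pd (sigman \<alpha> m \<omega> n) j t)
          - sigman \<alpha> m \<omega> n t + real n * (real n + \<alpha>)" by (rule part2[OF g n])
  have c3: "pd (betan \<alpha> m \<omega> n) k t = (\<Sum>j=1..m. t j * pd (pd (sigman \<alpha> m \<omega> n) j) k t)"
    by (rule part3[OF g k n])
  have pdb: "pd (betan \<alpha> m \<omega> n) k t =
    (- (\<omega> k * w0 \<alpha> (t k) * (poly (opoly \<alpha> m \<omega> t n) (t k))\<^sup>2) * hnorm \<alpha> m \<omega> t (n - 1) -
      hnorm \<alpha> m \<omega> t n * - (\<omega> k * w0 \<alpha> (t k) * (poly (opoly \<alpha> m \<omega> t (n - 1)) (t k))\<^sup>2)) /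
    (hnorm \<alpha> m \<omega> t (n - 1) * hnorm \<alpha> m \<omega> t (n - 1))"
    unfolding pd_def by (rule DERIV_imp_deriv[OF beta_deriv[OF g k]])
  have W: "w0 \<alpha> (t k) > 0" using w0_pos goodt_pos[OF g k] by blast
  have c4: "Rnk \<alpha> m \<omega> n k t = 1 / (2 * betan \<alpha> m \<omega> n t) *
        (- pd (betan \<alpha> m \<omega> n) k t + sgn (\<omega> k) *
           sqrt ((pd (betan \<alpha> m \<omega> n) k t)\<^sup>2 + 4 * betan \<alpha> m \<omega> n t * (rnk \<alpha> m \<omega> n k t)\<^sup>2))"
    unfolding pdb Rnk_def rnk_def betan_def
    by (rule alg4[OF W hnorm_pos[OF g] hnorm_pos[OF g]])
  show ?thesis using c1 c2 c3 c4 by blast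
qed


end
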